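(* Let $(\lambda,\varphi)$, $\lambda>0$, $\varphi\in L^2([0,1])$ nonzero, solve $$\int_0^1\Big(\int_0^x\!\!\int_0^y e^{\beta(x-u)}e^{\beta(y-v)}c_\alpha|u-v|^{-\alpha}\,dv\,du\Big)\varphi(y)\,dy=\lambda\varphi(x),\qquad x\in[0,1].$$ Define $\psi(x)=e^{-\beta x}\int_x^1e^{\beta r}\varphi(r)\,dr$, $u(x,t)=\int_0^1\psi(y)e^{-t|x-y|}\,dy$ for $t>0$, and $$\Phi_0(z)=-\frac{\Gamma(\alpha)\lambda}{c_\alpha}(\beta-z)\psi(0)+\int_0^\infty\frac{t^{\alpha-1}}{t-z}u(0,t)\,dt,\qquad \Phi_1(z)=-\frac{\Gamma(\alpha)\lambda}{c_\alpha}\psi'(1)+\int_0^\infty\frac{t^{\alpha-1}}{t-z}u(1,t)\,dt,$$ which are holomorphic on $\mathbb C\setminus\mathbb R_+$. Let $$\Lambda(z)=\frac{\Gamma(\alpha)\lambda}{c_\alpha}(z^2-\beta^2)+\int_0^\infty\frac{2t^\alpha}{t^2-z^2}\,dt,\qquad z\in\mathbb C\setminus\mathbb R.$$ Then the Laplace transform $\widehat\varphi(z)=\int_0^1e^{-zx}\varphi(x)\,dx$ satisfies, for all $z\in\mathbb C\setminus\mathbb R$ with $\Lambda(z)\ne0$, $$\widehat\varphi(z)=\widehat\varphi(-\beta)-\frac{z+\beta}{\Lambda(z)}\Big(\Phi_0(z)+e^{-z}\Phi_1(-z)\Big).$$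
   Context: Here $H\in(\frac12,1)$, $\alpha:=2-2H\in(0,1)$, $c_\alpha=(1-\frac\alpha2)(1-\alpha)$ and $\beta\in\mathbb R$. For $H>\frac12$ the kernel in the eigenvalue equation is the covariance function of the fractional Ornstein–Uhlenbeck process $X_t=\beta\int_0^tX_sds+B^H_t$ on $[0,1]$. *)

theory Defs
  imports "HOL-Analysis.Analysis"
begin

text \<open>Fractional OU setting: alpha = 2 - 2H, c_alpha = (1 - alpha/2)(1 - alpha).\<close>

definition c_alpha :: "real \<Rightarrow> real" where
  "c_alpha a = (1 - a / 2) * (1 - a)"

definition fou_kernel :: "real \<Rightarrow> real \<Rightarrow> real \<Rightarrow> real \<Rightarrow> real" where
  "fou_kernel a \<beta> x y =
     (LBINT u=0..x. (LBINT v=0..y.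
        exp (\<beta> * (x - u)) * exp (\<beta> * (y - v)) * c_alpha a * \<bar>u - v\<bar> powr (- a)))"

definition psi :: "real \<Rightarrow> (real \<Rightarrow> real) \<Rightarrow> real \<Rightarrow> real" where
  "psi \<beta> \<phi> x = exp (- \<beta> * x) * (LBINT r=x..1. exp (\<beta> * r) * \<phi> r)"

definition ufun :: "real \<Rightarrow> (real \<Rightarrow> real) \<Rightarrow> real \<Rightarrow> real \<Rightarrow> real" where
  "ufun \<beta> \<phi> x t = (LBINT y=0..1. psi \<beta> \<phi> y * exp (- t * \<bar>x - y\<bar>))"

definition Phi0 :: "real \<Rightarrow> real \<Rightarrow> real \<Rightarrow> (real \<Rightarrow> real) \<Rightarrow> complex \<Rightarrow> complex" where
  "Phi0 a \<beta> lam \<phi> z =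
     - complex_of_real (Gamma a * lam / c_alpha a) * (complex_of_real \<beta> - z)
         * complex_of_real (psi \<beta> \<phi> 0)
     + (LBINT t:{0<..}. complex_of_real (t powr (a - 1) * ufun \<beta> \<phi> 0 t) / (complex_of_real t - z))"

definition Phi1 :: "real \<Rightarrow> real \<Rightarrow> real \<Rightarrow> (real \<Rightarrow> real) \<Rightarrow> complex \<Rightarrow> complex" where
  "Phi1 a \<beta> lam \<phi> z =
     - complex_of_real (Gamma a * lam / c_alpha a)
         * complex_of_real (vector_derivative (psi \<beta> \<phi>) (at 1 within {0..1}))
     + (LBINT t:{0<..}. complex_of_real (t powr (a - 1) * ufun \<beta> \<phi> 1 t) / (complex_of_real t - z))"

definition Lam :: "real \<Rightarrow> real \<Rightarrow> real \<Rightarrow> complex \<Rightarrow> complex" where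
  "Lam a \<beta> lam z =
     complex_of_real (Gamma a * lam / c_alpha a) * (z ^ 2 - complex_of_real \<beta> ^ 2)
     + (LBINT t:{0<..}. complex_of_real (2 * t powr a) / (complex_of_real t ^ 2 - z ^ 2))"

definition laplace01 :: "(real \<Rightarrow> real) \<Rightarrow> complex \<Rightarrow> complex" where
  "laplace01 \<phi> z = (LBINT x=0..1. exp (- z * complex_of_real x) * complex_of_real (\<phi> x))"

end

theory Submission
  imports Defs
begin

lemma nn_powr01:
  fixes a :: real assumes "0 < a" "a < 1"
  shows "(\<integral>\<^sup>+s. ennreal (indicator {0..1} s * s powr (-a)) \<partial>lborel) = ennreal (1/(1-a))"
proof -
  have "((\<lambda>s. s powr (-a)) has_integral (1 powr (-a+1) / (-a+1))) {0..1}"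
    by (rule has_integral_powr_from_0) (use assms in auto)
  hence "integral\<^sup>N lborel (\<lambda>x. indicator {0..1} x * x powr (-a)) = 1 powr (-a+1) / (-a+1)"
    by (intro nn_integral_has_integral_lebesgue) auto
  thus ?thesis by simp
qed

lemma nn_sing_finite:
  fixes a :: real assumes "0 < a" "a < 1"
  shows "(\<integral>\<^sup>+s. ennreal (indicator {-1..1} s * \<bar>s\<bar> powr (-a)) \<partial>lborel) < \<infinity>"
proof -
  define f where "f = (\<lambda>s::real. ennreal (indicator {0..1} s * s powr (-a)))"
  have fm: "f \<in> borel_measurable borel" unfolding f_def by measurable
  have "(\<integral>\<^sup>+s. ennreal (indicator {-1..1} s * \<bar>s\<bar> powr (-a)) \<partial>lborel)
     \<le> (\<integral>\<^sup>+s. f s + f (0 + (-1) * s) \<partial>lborel)"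
  proof (intro nn_integral_mono)
    fix s :: real
    show "ennreal (indicator {-1..1} s * \<bar>s\<bar> powr (-a)) \<le> f s + f (0 + (-1) * s)"
    proof (cases "s \<ge> 0")
      case True
      hence "ennreal (indicator {-1..1} s * \<bar>s\<bar> powr (-a)) = f s" unfolding f_def
        by (auto simp: indicator_def)
      thus ?thesis by simp
    next
      case False
      hence "ennreal (indicator {-1..1} s * \<bar>s\<bar> powr (-a)) = f (0 + (-1) * s)" unfolding f_def
        by (auto simp: indicator_def)
      thus ?thesis by simp
    qed
  qed
  also have "\<dots> = (\<integral>\<^sup>+s. f s \<partial>lborel) + (\<integral>\<^sup>+s. f (0 + (-1) * s) \<partial>lborel)"
    by (rule nn_integral_add) (use fm in auto)
  also have "(\<integral>\<^sup>+s. f (0 + (-1) * s) \<partial>lborel) = (\<integral>\<^sup>+s. f s \<partial>lborel)"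
    using nn_integral_real_affine[OF fm, of "-1" 0] by simp
  also have "(\<integral>\<^sup>+s. f s \<partial>lborel) = ennreal (1/(1-a))"
    unfolding f_def by (rule nn_powr01[OF assms])
  also have "ennreal (1/(1-a)) + ennreal (1/(1-a)) < \<infinity>"
    by (simp del: ennreal_plus add: ennreal_plus[symmetric])
  finally show ?thesis .
qed

lemma fubini2:
  fixes F :: "real \<Rightarrow> real \<Rightarrow> 'b::{banach,second_countable_topology}"
  assumes "integrable (lborel \<Otimes>\<^sub>M lborel) (\<lambda>(x,y). F x y)"
  shows "(\<integral>x. (\<integral>y. F x y \<partial>lborel) \<partial>lborel) = (\<integral>y. (\<integral>x. F x y \<partial>lborel) \<partial>lborel)"
  using lborel_pair.Fubini_integral[OF assms] by simp

lemma integrable2I: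
  fixes F :: "real \<Rightarrow> real \<Rightarrow> 'b::{banach,second_countable_topology}"
  assumes m: "(\<lambda>(x,y). F x y) \<in> borel_measurable (lborel \<Otimes>\<^sub>M lborel)"
    and f: "(\<integral>\<^sup>+x. (\<integral>\<^sup>+y. ennreal (norm (F x y)) \<partial>lborel) \<partial>lborel) < \<infinity>"
  shows "integrable (lborel \<Otimes>\<^sub>M lborel) (\<lambda>(x,y). F x y)"
proof -
  have "(\<integral>\<^sup>+p. ennreal (norm ((\<lambda>(x,y). F x y) p)) \<partial>(lborel \<Otimes>\<^sub>M lborel))
        = (\<integral>\<^sup>+x. (\<integral>\<^sup>+y. ennreal (norm (F x y)) \<partial>lborel) \<partial>lborel)"
    using lborel.nn_integral_fst[of "\<lambda>p. ennreal (norm ((\<lambda>(x,y). F x y) p))" lborel] m by simp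
  thus ?thesis using m f by (simp add: integrable_iff_bounded)
qed

interpretation lborel_p3: pair_sigma_finite "lborel :: real measure" "lborel \<Otimes>\<^sub>M (lborel :: real measure)" ..

lemma integrable3I:
  fixes F :: "real \<Rightarrow> real \<Rightarrow> real \<Rightarrow> 'b::{banach,second_countable_topology}"
  assumes m: "(\<lambda>(y,(u,v)). F y u v) \<in> borel_measurable (lborel \<Otimes>\<^sub>M (lborel \<Otimes>\<^sub>M lborel))"
    and f: "(\<integral>\<^sup>+u. (\<integral>\<^sup>+v. (\<integral>\<^sup>+y. ennreal (norm (F y u v)) \<partial>lborel) \<partial>lborel) \<partial>lborel) < \<infinity>"
  shows "integrable (lborel \<Otimes>\<^sub>M (lborel \<Otimes>\<^sub>M lborel)) (\<lambda>(y,(u,v)). F y u v)"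
proof -
  let ?g = "\<lambda>q. ennreal (norm ((\<lambda>(y,(u,v)). F y u v) q))"
  have m2: "?g \<in> borel_measurable (lborel \<Otimes>\<^sub>M (lborel \<Otimes>\<^sub>M lborel))" using m by measurable
  have "(\<integral>\<^sup>+q. ?g q \<partial>(lborel \<Otimes>\<^sub>M (lborel \<Otimes>\<^sub>M lborel)))
        = (\<integral>\<^sup>+p. (\<integral>\<^sup>+y. ?g (y,p) \<partial>lborel) \<partial>(lborel \<Otimes>\<^sub>M lborel))"
    using lborel_p3.nn_integral_snd[OF m2] by simp
  also have "\<dots> = (\<integral>\<^sup>+u. (\<integral>\<^sup>+v. (\<integral>\<^sup>+y. ?g (y,(u,v)) \<partial>lborel) \<partial>lborel) \<partial>lborel)"
    by (rule lborel.nn_integral_fst[symmetric]) (use m2 in measurable)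
  finally show ?thesis using m f by (simp add: integrable_iff_bounded)
qed

lemma fubini3:
  fixes F :: "real \<Rightarrow> real \<Rightarrow> real \<Rightarrow> 'b::{banach,second_countable_topology}"
  assumes I: "integrable (lborel \<Otimes>\<^sub>M (lborel \<Otimes>\<^sub>M lborel)) (\<lambda>(y,(u,v)). F y u v)"
  shows "(\<integral>y. (\<integral>u. (\<integral>v. F y u v \<partial>lborel) \<partial>lborel) \<partial>lborel)
       = (\<integral>u. (\<integral>v. (\<integral>y. F y u v \<partial>lborel) \<partial>lborel) \<partial>lborel)"
proof -
  have I': "integrable (lborel \<Otimes>\<^sub>M (lborel \<Otimes>\<^sub>M lborel)) (\<lambda>(y,p). (\<lambda>(u,v). F y u v) p)"
    using I by (simp add: case_prod_beta')
  have AE: "AE y in lborel. integrable (lborel \<Otimes>\<^sub>M lborel) (\<lambda>p. (\<lambda>(u,v). F y u v) p)"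
    using lborel_p3.AE_integrable_fst[OF I'] by simp
  have "(\<integral>y. (\<integral>u. (\<integral>v. F y u v \<partial>lborel) \<partial>lborel) \<partial>lborel)
      = (\<integral>y. (\<integral>p. (\<lambda>(u,v). F y u v) p \<partial>(lborel \<Otimes>\<^sub>M lborel)) \<partial>lborel)"
  proof (intro integral_cong_AE)
    have m[measurable]: "(\<lambda>(y,(u,v)). F y u v) \<in> borel_measurable (lborel \<Otimes>\<^sub>M (lborel \<Otimes>\<^sub>M lborel))"
      using I by (rule borel_measurable_integrable)
    have m3[measurable]: "(\<lambda>x. F (fst (fst x)) (snd (fst x)) (snd x)) \<in> borel_measurable ((lborel \<Otimes>\<^sub>M lborel) \<Otimes>\<^sub>M lborel)"
      using measurable_compose[OF _ m, of "\<lambda>x. (fst (fst x), (snd (fst x), snd x))" "(lborel \<Otimes>\<^sub>M lborel) \<Otimes>\<^sub>M lborel"]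
      by (simp add: case_prod_beta')
    show "(\<lambda>y. \<integral>u. (\<integral>v. F y u v \<partial>lborel) \<partial>lborel) \<in> borel_measurable lborel" by measurable
    show "(\<lambda>y. \<integral>p. (\<lambda>(u,v). F y u v) p \<partial>(lborel \<Otimes>\<^sub>M lborel)) \<in> borel_measurable lborel" by measurable
    show "AE y in lborel. (\<integral>u. (\<integral>v. F y u v \<partial>lborel) \<partial>lborel) = (\<integral>p. (\<lambda>(u,v). F y u v) p \<partial>(lborel \<Otimes>\<^sub>M lborel))"
      using AE by eventually_elim (auto intro!: lborel_pair.integral_fst)
  qed
  also have "\<dots> = (\<integral>p. (\<integral>y. (\<lambda>(u,v). F y u v) p \<partial>lborel) \<partial>(lborel \<Otimes>\<^sub>M lborel))"
    using lborel_p3.Fubini_integral[OF I'] by simp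
  also have "\<dots> = (\<integral>u. (\<integral>v. (\<integral>y. F y u v \<partial>lborel) \<partial>lborel) \<partial>lborel)"
  proof -
    have "integrable (lborel \<Otimes>\<^sub>M lborel) (\<lambda>p. \<integral>y. (\<lambda>(u,v). F y u v) p \<partial>lborel)"
      using lborel_p3.integrable_snd[OF I'] by simp
    hence "integrable (lborel \<Otimes>\<^sub>M lborel) (\<lambda>(u,v). \<integral>y. F y u v \<partial>lborel)"
      by (simp add: case_prod_beta')
    from lborel_pair.integral_fst[OF this] show ?thesis by (simp add: case_prod_beta')
  qed
  finally show ?thesis .
qed

lemma exp_vd:
  fixes w :: complex assumes "w \<noteq> 0"
  shows "((\<lambda>x::real. exp (w * complex_of_real x) / w) has_vector_derivative exp (w * complex_of_real x)) (at x within S)"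
proof -
  have "((\<lambda>x::real. complex_of_real x) has_vector_derivative 1) (at x within S)"
    by (rule has_vector_derivative_of_real[where f="\<lambda>x. x" and D=1, simplified])
  have d: "((\<lambda>y. exp (w * y) / w) has_field_derivative exp (w * complex_of_real x)) (at (complex_of_real x) within of_real ` S)"
    by (rule derivative_eq_intros refl | use assms in simp)+
  show ?thesis
    using field_vector_diff_chain_within[OF \<open>((\<lambda>x::real. complex_of_real x) has_vector_derivative 1) (at x within S)\<close> d]
    by (simp add: o_def)
qed

lemma exp_int:
  fixes w :: complex assumes "w \<noteq> 0" "p \<le> q"
  shows "(\<integral>x. indicator {p..q} x *\<^sub>R exp (w * complex_of_real x) \<partial>lborel) = (exp (w * q) - exp (w * p)) / w"
proof -
  have "(\<integral>x. indicator {p..q} x *\<^sub>R exp (w * complex_of_real x) \<partial>lborel) = (LBINT x:{p..q}. exp (w * complex_of_real x))"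
    by (simp add: set_lebesgue_integral_def)
  also have "\<dots> = (LBINT x=p..q. exp (w * complex_of_real x))"
    using assms by (simp add: interval_integral_Icc)
  also have "\<dots> = exp (w * q) / w - exp (w * p) / w"
    by (rule interval_integral_FTC_finite[where F="\<lambda>x. exp (w * complex_of_real x) / w"])
       (auto intro!: continuous_intros exp_vd assms)
  finally show ?thesis by (simp add: diff_divide_distrib)
qed

lemma exp_int_open:
  fixes w :: complex assumes "w \<noteq> 0" "p \<le> q"
  shows "(\<integral>x. indicator {p<..<q} x *\<^sub>R exp (w * complex_of_real x) \<partial>lborel) = (exp (w * q) - exp (w * p)) / w"
proof -
  have "(\<integral>x. indicator {p<..<q} x *\<^sub>R exp (w * complex_of_real x) \<partial>lborel) = (LBINT x=p..q. exp (w * complex_of_real x))"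
    using assms by (simp add: interval_lebesgue_integral_le_eq set_lebesgue_integral_def)
  also have "\<dots> = exp (w * q) / w - exp (w * p) / w"
    by (rule interval_integral_FTC_finite[where F="\<lambda>x. exp (w * complex_of_real x) / w"])
       (auto intro!: continuous_intros exp_vd assms)
  finally show ?thesis by (simp add: diff_divide_distrib)
qed

lemma nn_gamma:
  fixes a s :: real assumes a: "0 < a" and s: "0 < s"
  shows "(\<integral>\<^sup>+t. ennreal (indicator {0<..} t * t powr (a - 1) * exp (- (t * s))) \<partial>lborel) = ennreal (Gamma a * s powr (- a))"
proof -
  define f where "f = (\<lambda>t::real. ennreal (indicator {0..} t * t powr (a - 1) / exp t))"
  have fm: "f \<in> borel_measurable borel" unfolding f_def by measurable
  have "ennreal (Gamma a) = (\<integral>\<^sup>+t. f t \<partial>lborel)"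
    unfolding f_def using Gamma_conv_nn_integral_real[OF a] by simp
  also have "\<dots> = ennreal s * (\<integral>\<^sup>+t. f (0 + s * t) \<partial>lborel)"
    using nn_integral_real_affine[OF fm, of s 0] s by simp
  also have "(\<integral>\<^sup>+t. f (0 + s * t) \<partial>lborel) = (\<integral>\<^sup>+t. ennreal (s powr (a - 1)) * ennreal (indicator {0<..} t * t powr (a - 1) * exp (- (t * s))) \<partial>lborel)"
  proof (intro nn_integral_cong)
    fix t :: real
    show "f (0 + s * t) = ennreal (s powr (a - 1)) * ennreal (indicator {0<..} t * t powr (a - 1) * exp (- (t * s)))"
    proof (cases "t > 0")
      case True
      hence "(s * t) powr (a - 1) = s powr (a - 1) * t powr (a - 1)" using s by (simp add: powr_mult)
      thus ?thesis using True s unfolding f_def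
        by (simp add: ennreal_mult'[symmetric] exp_minus field_simps mult.commute)
    next
      case False
      thus ?thesis using s unfolding f_def by (auto simp: indicator_def zero_le_mult_iff)
    qed
  qed
  also have "\<dots> = ennreal (s powr (a - 1)) * (\<integral>\<^sup>+t. ennreal (indicator {0<..} t * t powr (a - 1) * exp (- (t * s))) \<partial>lborel)"
    by (rule nn_integral_cmult) measurable
  finally have eq: "ennreal (Gamma a) = ennreal s * (ennreal (s powr (a - 1)) * (\<integral>\<^sup>+t. ennreal (indicator {0<..} t * t powr (a - 1) * exp (- (t * s))) \<partial>lborel))" .
  have "ennreal s * ennreal (s powr (a - 1)) = ennreal (s powr a)"
    using s by (simp add: ennreal_mult'[symmetric] powr_mult_base)
  hence eq2: "ennreal (Gamma a) = ennreal (s powr a) * (\<integral>\<^sup>+t. ennreal (indicator {0<..} t * t powr (a - 1) * exp (- (t * s))) \<partial>lborel)"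
    using eq by (simp add: mult.assoc[symmetric])
  have "ennreal (s powr (-a)) * ennreal (Gamma a) = (\<integral>\<^sup>+t. ennreal (indicator {0<..} t * t powr (a - 1) * exp (- (t * s))) \<partial>lborel)"
    unfolding eq2 mult.assoc[symmetric] using s
    by (simp add: ennreal_mult'[symmetric] powr_add[symmetric])
  thus ?thesis using s a Gamma_real_pos[OF a]
    by (simp add: ennreal_mult'[symmetric] mult.commute)
qed

lemma nn_sing_u:
  fixes a u :: real assumes a: "0 < a" "a < 1" and u: "0 \<le> u" "u \<le> 1"
  shows "(\<integral>\<^sup>+v. ennreal (indicator {0..1} v * \<bar>u - v\<bar> powr (-a)) \<partial>lborel) \<le> ennreal (2/(1-a))"
proof -
  define f where "f = (\<lambda>v::real. ennreal (indicator {0..1} v * \<bar>u - v\<bar> powr (-a)))"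
  have fm: "f \<in> borel_measurable borel" unfolding f_def by measurable
  have "(\<integral>\<^sup>+v. f v \<partial>lborel) = (\<integral>\<^sup>+s. f (u + (-1) * s) \<partial>lborel)"
    using nn_integral_real_affine[OF fm, of "-1" u] by simp
  also have "\<dots> \<le> (\<integral>\<^sup>+s. ennreal (indicator {-1..1} s * \<bar>s\<bar> powr (-a)) \<partial>lborel)"
    unfolding f_def using u by (intro nn_integral_mono ennreal_leI) (auto simp: indicator_def)
  also have "\<dots> \<le> ennreal (2/(1-a))"
  proof -
    define g where "g = (\<lambda>s::real. ennreal (indicator {0..1} s * s powr (-a)))"
    have gm: "g \<in> borel_measurable borel" unfolding g_def by measurable
    have "(\<integral>\<^sup>+s. ennreal (indicator {-1..1} s * \<bar>s\<bar> powr (-a)) \<partial>lborel)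
       \<le> (\<integral>\<^sup>+s. g s + g (0 + (-1) * s) \<partial>lborel)"
    proof (intro nn_integral_mono)
      fix s :: real
      show "ennreal (indicator {-1..1} s * \<bar>s\<bar> powr (-a)) \<le> g s + g (0 + (-1) * s)"
      proof (cases "s \<ge> 0")
        case True
        hence "ennreal (indicator {-1..1} s * \<bar>s\<bar> powr (-a)) = g s" unfolding g_def
          by (auto simp: indicator_def)
        thus ?thesis by simp
      next
        case False
        hence "ennreal (indicator {-1..1} s * \<bar>s\<bar> powr (-a)) = g (0 + (-1) * s)" unfolding g_def
          by (auto simp: indicator_def)
        thus ?thesis by simp
      qed
    qed
    also have "\<dots> = (\<integral>\<^sup>+s. g s \<partial>lborel) + (\<integral>\<^sup>+s. g (0 + (-1) * s) \<partial>lborel)"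
      by (rule nn_integral_add) (use gm in auto)
    also have "(\<integral>\<^sup>+s. g (0 + (-1) * s) \<partial>lborel) = (\<integral>\<^sup>+s. g s \<partial>lborel)"
      using nn_integral_real_affine[OF gm, of "-1" 0] by simp
    also have "(\<integral>\<^sup>+s. g s \<partial>lborel) = ennreal (1/(1-a))"
      unfolding g_def by (rule nn_powr01[OF a])
    also have "ennreal (1/(1-a)) + ennreal (1/(1-a)) = ennreal (2/(1-a))"
      using a by (simp del: ennreal_plus add: ennreal_plus[symmetric])
    finally show ?thesis .
  qed
  finally show ?thesis unfolding f_def by simp
qed

lemma meas3:
  "f \<in> borel_measurable (borel \<Otimes>\<^sub>M (borel \<Otimes>\<^sub>M borel)) \<Longrightarrow> f \<in> borel_measurable (lborel \<Otimes>\<^sub>M (lborel \<Otimes>\<^sub>M (lborel::real measure)))"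
  by (simp add: measurable_def space_pair_measure sets_pair_measure_cong[OF sets_lborel sets_pair_measure_cong[OF sets_lborel sets_lborel]])

lemma meas2':
  "f \<in> borel_measurable (borel \<Otimes>\<^sub>M borel) \<Longrightarrow> f \<in> borel_measurable (borel \<Otimes>\<^sub>M (lborel::real measure))"
  by (simp add: measurable_def space_pair_measure sets_pair_measure_cong[OF refl sets_lborel])

lemma meas2:
  "f \<in> borel_measurable (borel \<Otimes>\<^sub>M borel) \<Longrightarrow> f \<in> borel_measurable (lborel \<Otimes>\<^sub>M (lborel::real measure))"
  by (simp add: measurable_def space_pair_measure sets_pair_measure_cong[OF sets_lborel sets_lborel])

locale fou =
  fixes a b lam :: real and \<phi> :: "real \<Rightarrow> real"
  assumes a0: "0 < a" and a1: "a < 1" and lam: "0 < lam"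
    and meas: "set_borel_measurable lborel {0..1} \<phi>"
    and L2: "set_integrable lborel {0..1} (\<lambda>x. (\<phi> x)\<^sup>2)"
    and eigen: "\<forall>x\<in>{0..1}. (LBINT y=0..1. fou_kernel a b x y * \<phi> y) = lam * \<phi> x"
begin

definition "c = c_alpha a"

lemma c_pos: "0 < c"
  using a0 a1 by (simp add: c_def c_alpha_def)

definition "phi0 x = indicator {0..1} x * \<phi> x"

lemma phi0_meas[measurable]: "phi0 \<in> borel_measurable borel"
  using meas unfolding set_borel_measurable_def phi0_def by simp

lemma phi0_int: "integrable lborel phi0"
proof -
  have A: "integrable lborel (\<lambda>x. indicator {0..1} x *\<^sub>R (\<phi> x)\<^sup>2)"
    using L2 by (simp add: set_integrable_def)
  have B: "integrable lborel (\<lambda>x. indicator {0..1::real} x :: real)"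
    by (rule integrable_real_indicator) auto
  have I: "integrable lborel (\<lambda>x. indicator {0..1::real} x + indicator {0..1} x *\<^sub>R (\<phi> x)\<^sup>2)"
    using Bochner_Integration.integrable_add[OF B A] .
  have AE: "AE x in lborel. norm (phi0 x) \<le> norm (indicator {0..1::real} x + indicator {0..1} x *\<^sub>R (\<phi> x)\<^sup>2)"
  proof (intro AE_I2)
    fix x :: real
    have "\<bar>\<phi> x\<bar> \<le> 1 + (\<phi> x)\<^sup>2"
    proof (cases "\<bar>\<phi> x\<bar> \<le> 1")
      case False
      hence "\<bar>\<phi> x\<bar> * 1 \<le> \<bar>\<phi> x\<bar> * \<bar>\<phi> x\<bar>" by (intro mult_left_mono) auto
      thus ?thesis by (simp add: power2_eq_square)
    qed (use zero_le_power2[of "\<phi> x"] in linarith)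
    thus "norm (phi0 x) \<le> norm (indicator {0..1::real} x + indicator {0..1} x *\<^sub>R (\<phi> x)\<^sup>2)"
      by (auto simp: phi0_def indicator_def)
  qed
  show ?thesis by (rule Bochner_Integration.integrable_bound[OF I _ AE]) simp
qed

definition "N1 = (\<integral>x. \<bar>phi0 x\<bar> \<partial>lborel)"

lemma N1_nonneg: "0 \<le> N1" unfolding N1_def by simp

lemma nn_phi0: "(\<integral>\<^sup>+x. ennreal \<bar>phi0 x\<bar> \<partial>lborel) = ennreal N1"
  unfolding N1_def by (rule nn_integral_eq_integral) (use phi0_int in auto)

definition "Psi0 v = indicator {0..1} v * psi b \<phi> v"

lemma Psi0_repr:
  "Psi0 v = (\<integral>y. indicator {0..1} v * (if v \<le> y then 1 else 0) * exp (b * (y - v)) * phi0 y \<partial>lborel)"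
proof (cases "v \<in> {0..1}")
  case True
  have "psi b \<phi> v = exp (- b * v) * (LBINT r=v..1. exp (b * r) * \<phi> r)" by (simp add: psi_def)
  also have "(LBINT r=v..1. exp (b * r) * \<phi> r) = (\<integral>r. indicator {v..1} r * (exp (b * r) * \<phi> r) \<partial>lborel)"
    using True interval_integral_Icc[of v 1 "\<lambda>r. exp (b * r) * \<phi> r"] by (simp add: set_lebesgue_integral_def one_ereal_def)
  also have "exp (- b * v) * \<dots> = (\<integral>r. exp (- b * v) * (indicator {v..1} r * (exp (b * r) * \<phi> r)) \<partial>lborel)"
    by simp
  also have "\<dots> = (\<integral>y. indicator {0..1} v * (if v \<le> y then 1 else 0) * exp (b * (y - v)) * phi0 y \<partial>lborel)"
  proof (rule Bochner_Integration.integral_cong[OF refl])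
    fix r
    show "exp (- b * v) * (indicator {v..1} r * (exp (b * r) * \<phi> r)) = indicator {0..1} v * (if v \<le> r then 1 else 0) * exp (b * (r - v)) * phi0 r"
      using True by (cases "v \<le> r \<and> r \<le> 1") (auto simp: indicator_def phi0_def exp_diff exp_minus field_simps)
  qed
  finally show ?thesis using True by (simp add: Psi0_def)
qed (simp add: Psi0_def)

lemma Psi0_meas[measurable]: "Psi0 \<in> borel_measurable borel"
proof -
  have eq: "Psi0 = (\<lambda>v. \<integral>y. indicator {0..1} v * (if v \<le> y then 1 else 0) * exp (b * (y - v)) * phi0 y \<partial>lborel)"
    by (rule ext, rule Psi0_repr)
  have "(\<lambda>v. \<integral>y. indicator {0..1} v * (if v \<le> y then 1 else 0) * exp (b * (y - v)) * phi0 y \<partial>lborel) \<in> borel_measurable borel"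
    by (rule lborel.borel_measurable_lebesgue_integral, rule meas2', measurable)
  thus ?thesis unfolding eq .
qed

lemma Psi0_bound: "\<bar>Psi0 v\<bar> \<le> exp \<bar>b\<bar> * N1"
proof -
  have bnd: "norm (indicator {0..1} v * (if v \<le> y then 1 else 0) * exp (b * (y - v)) * phi0 y) \<le> exp \<bar>b\<bar> * \<bar>phi0 y\<bar>" for y
  proof (cases "v \<in> {0..1} \<and> v \<le> y \<and> y \<le> 1")
    case True
    have "exp (b * (y - v)) \<le> exp \<bar>b\<bar>"
    proof -
      have "b * (y - v) \<le> \<bar>b\<bar> * (y - v)" using True by (intro mult_right_mono) auto
      also have "\<dots> \<le> \<bar>b\<bar> * 1" using True by (intro mult_left_mono) auto
      finally show ?thesis by simp
    qed
    thus ?thesis using True by (auto simp: abs_mult intro!: mult_right_mono)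
  next
    case False
    thus ?thesis by (auto simp: phi0_def indicator_def)
  qed
  have I: "integrable lborel (\<lambda>y. exp \<bar>b\<bar> * \<bar>phi0 y\<bar>)" using phi0_int by auto
  have I2: "integrable lborel (\<lambda>y. norm (indicator {0..1} v * (if v \<le> y then 1 else 0) * exp (b * (y - v)) * phi0 y))"
    by (rule Bochner_Integration.integrable_bound[OF I]) (use bnd in auto)
  have "\<bar>Psi0 v\<bar> \<le> (\<integral>y. norm (indicator {0..1} v * (if v \<le> y then 1 else 0) * exp (b * (y - v)) * phi0 y) \<partial>lborel)"
    unfolding Psi0_repr using integral_norm_bound[of lborel "\<lambda>y. indicator {0..1} v * (if v \<le> y then 1 else 0) * exp (b * (y - v)) * phi0 y"] by simp
  also have "\<dots> \<le> (\<integral>y. exp \<bar>b\<bar> * \<bar>phi0 y\<bar> \<partial>lborel)"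
    by (rule integral_mono[OF I2 I bnd])
  also have "\<dots> = exp \<bar>b\<bar> * N1" by (simp add: N1_def)
  finally show ?thesis .
qed

end

lemma exp_bound01: fixes b s :: real shows "0 \<le> s \<Longrightarrow> s \<le> 1 \<Longrightarrow> exp (b * s) \<le> exp \<bar>b\<bar>"
proof -
  assume s: "0 \<le> s" "s \<le> 1"
  have "b * s \<le> \<bar>b\<bar> * s" using s by (intro mult_right_mono) auto
  also have "\<dots> \<le> \<bar>b\<bar> * 1" using s by (intro mult_left_mono) auto
  finally show ?thesis by simp
qed

context fou begin

lemma nn3_fin:
  fixes F :: "real \<Rightarrow> real \<Rightarrow> real \<Rightarrow> real"
  assumes K: "0 \<le> K"
    and bnd: "\<And>u v. u \<noteq> v \<Longrightarrow> (\<integral>\<^sup>+y. ennreal (norm (F y u v)) \<partial>lborel) \<le> ennreal (K * indicator {0..1} u * indicator {0..1} v * \<bar>u - v\<bar> powr (-a))"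
  shows "(\<integral>\<^sup>+u. (\<integral>\<^sup>+v. (\<integral>\<^sup>+y. ennreal (norm (F y u v)) \<partial>lborel) \<partial>lborel) \<partial>lborel) < \<infinity>"
proof -
  have "(\<integral>\<^sup>+u. (\<integral>\<^sup>+v. (\<integral>\<^sup>+y. ennreal (norm (F y u v)) \<partial>lborel) \<partial>lborel) \<partial>lborel)
     \<le> (\<integral>\<^sup>+u. ennreal (K * indicator {0..1} u * (2/(1-a))) \<partial>(lborel::real measure))"
  proof (intro nn_integral_mono)
    fix u :: real
    have "(\<integral>\<^sup>+v. (\<integral>\<^sup>+y. ennreal (norm (F y u v)) \<partial>lborel) \<partial>lborel)
        \<le> (\<integral>\<^sup>+v. ennreal (K * indicator {0..1} u) * ennreal (indicator {0..1} v * \<bar>u - v\<bar> powr (-a)) \<partial>lborel)"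
    proof (rule nn_integral_mono_AE)
      show "AE v in lborel. (\<integral>\<^sup>+y. ennreal (norm (F y u v)) \<partial>lborel) \<le> ennreal (K * indicator {0..1} u) * ennreal (indicator {0..1} v * \<bar>u - v\<bar> powr (-a))"
        using AE_lborel_singleton[of u]
      proof eventually_elim
        case (elim v)
        hence "u \<noteq> v" by simp
        from bnd[OF this] show ?case using K
          by (simp add: ennreal_mult'[symmetric] mult.assoc)
      qed
    qed
    also have "\<dots> = ennreal (K * indicator {0..1} u) * (\<integral>\<^sup>+v. ennreal (indicator {0..1} v * \<bar>u - v\<bar> powr (-a)) \<partial>lborel)"
      by (rule nn_integral_cmult) measurable
    also have "\<dots> \<le> ennreal (K * indicator {0..1} u) * ennreal (2/(1-a))"
    proof (cases "u \<in> {0..1}")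
      case True
      thus ?thesis using nn_sing_u[OF a0 a1, of u] by (intro mult_left_mono) auto
    qed simp
    also have "\<dots> = ennreal (K * indicator {0..1} u * (2/(1-a)))"
      using K a1 by (simp add: ennreal_mult'[symmetric])
    finally show "(\<integral>\<^sup>+v. (\<integral>\<^sup>+y. ennreal (norm (F y u v)) \<partial>lborel) \<partial>lborel) \<le> ennreal (K * indicator {0..1} u * (2/(1-a)))" .
  qed
  also have "\<dots> = (\<integral>\<^sup>+u. ennreal (K * (2/(1-a))) * indicator {0..1} u \<partial>(lborel::real measure))"
    by (intro nn_integral_cong) (auto simp: indicator_def)
  also have "\<dots> = ennreal (K * (2/(1-a))) * emeasure lborel {0..1::real}"
    by (rule nn_integral_cmult_indicator) simp
  also have "\<dots> < \<infinity>" by (simp add: ennreal_mult_less_top)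
  finally show ?thesis .
qed


definition "g u = c * (\<integral>v. \<bar>u - v\<bar> powr (-a) * Psi0 v \<partial>lborel)"

lemma int2_mult:
  fixes A :: "real \<Rightarrow> real" and B :: "real \<Rightarrow> real \<Rightarrow> real" and C :: real
  shows "(\<integral>u. A u * (\<integral>v. B u v \<partial>lborel) \<partial>lborel) * C = (\<integral>u. (\<integral>v. A u * B u v * C \<partial>lborel) \<partial>lborel)"
proof -
  have "(\<integral>u. A u * (\<integral>v. B u v \<partial>lborel) \<partial>lborel) * C = (\<integral>u. A u * (\<integral>v. B u v \<partial>lborel) * C \<partial>lborel)"
    by simp
  also have "\<dots> = (\<integral>u. (\<integral>v. A u * B u v * C \<partial>lborel) \<partial>lborel)"
  proof (rule Bochner_Integration.integral_cong[OF refl])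
    fix u
    have "A u * (\<integral>v. B u v \<partial>lborel) * C = (\<integral>v. A u * B u v \<partial>lborel) * C" by simp
    also have "\<dots> = (\<integral>v. A u * B u v * C \<partial>lborel)" by simp
    finally show "A u * (\<integral>v. B u v \<partial>lborel) * C = (\<integral>v. A u * B u v * C \<partial>lborel)" .
  qed
  finally show ?thesis .
qed

lemma stepA:
  assumes x: "0 \<le> x" "x \<le> 1"
  shows "lam * \<phi> x = (\<integral>u. indicator {0..x} u * exp (b * (x - u)) * g u \<partial>lborel)"
proof -
  define F where "F y u v = indicator {0..x} u * (if 0 \<le> v \<and> v \<le> y then 1 else 0) * (exp (b * (x - u)) * exp (b * (y - v)) * c * \<bar>u - v\<bar> powr (-a)) * phi0 y" for y u v :: real
  define C where "C = exp \<bar>b\<bar> * exp \<bar>b\<bar> * c"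
  have C: "0 \<le> C" using c_pos by (simp add: C_def)
  have Fm: "(\<lambda>(y,(u,v)). F y u v) \<in> borel_measurable (lborel \<Otimes>\<^sub>M (lborel \<Otimes>\<^sub>M lborel))"
    unfolding F_def by (rule meas3) measurable
  have Fb: "norm (F y u v) \<le> C * indicator {0..1} u * indicator {0..1} v * \<bar>u - v\<bar> powr (-a) * \<bar>phi0 y\<bar>" for y u v
  proof (cases "u \<in> {0..x} \<and> 0 \<le> v \<and> v \<le> y \<and> y \<in> {0..1}")
    case True
    have e1: "exp (b * (x - u)) \<le> exp \<bar>b\<bar>" using True x by (intro exp_bound01) auto
    have e2: "exp (b * (y - v)) \<le> exp \<bar>b\<bar>" using True by (intro exp_bound01) auto
    have "norm (F y u v) = exp (b * (x - u)) * exp (b * (y - v)) * c * \<bar>u - v\<bar> powr (-a) * \<bar>phi0 y\<bar>"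
      using True c_pos by (simp add: F_def abs_mult)
    also have "\<dots> \<le> exp \<bar>b\<bar> * exp \<bar>b\<bar> * c * \<bar>u - v\<bar> powr (-a) * \<bar>phi0 y\<bar>"
      using e1 e2 c_pos by (intro mult_right_mono mult_mono) auto
    also have "\<dots> = C * indicator {0..1} u * indicator {0..1} v * \<bar>u - v\<bar> powr (-a) * \<bar>phi0 y\<bar>"
      using True x by (simp add: C_def indicator_def)
    finally show ?thesis .
  next
    case False
    hence "F y u v = 0" by (auto simp: F_def phi0_def indicator_def)
    thus ?thesis using C by simp
  qed
  have Fi: "integrable (lborel \<Otimes>\<^sub>M (lborel \<Otimes>\<^sub>M lborel)) (\<lambda>(y,(u,v)). F y u v)"
  proof (rule integrable3I[OF Fm])
    have "(\<integral>\<^sup>+u. (\<integral>\<^sup>+v. (\<integral>\<^sup>+y. ennreal (norm (norm (F y u v))) \<partial>lborel) \<partial>lborel) \<partial>lborel) < \<infinity>"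
    proof (rule nn3_fin[where K="C * N1"])
      show "0 \<le> C * N1" using C N1_nonneg by simp
      fix u v :: real
      have "(\<integral>\<^sup>+y. ennreal (norm (norm (F y u v))) \<partial>lborel)
          \<le> (\<integral>\<^sup>+y. ennreal (C * indicator {0..1} u * indicator {0..1} v * \<bar>u - v\<bar> powr (-a)) * ennreal \<bar>phi0 y\<bar> \<partial>lborel)"
        using Fb C by (intro nn_integral_mono) (auto simp: ennreal_mult'[symmetric] intro!: ennreal_leI)
      also have "\<dots> = ennreal (C * indicator {0..1} u * indicator {0..1} v * \<bar>u - v\<bar> powr (-a)) * ennreal N1"
        by (subst nn_integral_cmult) (simp_all add: nn_phi0)
      also have "\<dots> = ennreal (C * N1 * indicator {0..1} u * indicator {0..1} v * \<bar>u - v\<bar> powr (-a))"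
        using C N1_nonneg by (simp add: ennreal_mult'[symmetric] mult_ac)
      finally show "(\<integral>\<^sup>+y. ennreal (norm (norm (F y u v))) \<partial>lborel) \<le> ennreal (C * N1 * indicator {0..1} u * indicator {0..1} v * \<bar>u - v\<bar> powr (-a))" .
    qed
    thus "(\<integral>\<^sup>+u. (\<integral>\<^sup>+v. (\<integral>\<^sup>+y. ennreal (norm (F y u v)) \<partial>lborel) \<partial>lborel) \<partial>lborel) < \<infinity>" by simp
  qed
  have LHS: "lam * \<phi> x = (\<integral>y. (\<integral>u. (\<integral>v. F y u v \<partial>lborel) \<partial>lborel) \<partial>lborel)"
  proof -
    have "lam * \<phi> x = (LBINT y=0..1. fou_kernel a b x y * \<phi> y)" using eigen x by simp
    also have "\<dots> = (\<integral>y. indicator {0..1} y * (fou_kernel a b x y * \<phi> y) \<partial>lborel)"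
      using interval_integral_Icc[of 0 1 "\<lambda>y. fou_kernel a b x y * \<phi> y"] by (simp add: set_lebesgue_integral_def one_ereal_def zero_ereal_def)
    also have "\<dots> = (\<integral>y. (\<integral>u. (\<integral>v. F y u v \<partial>lborel) \<partial>lborel) \<partial>lborel)"
    proof (rule Bochner_Integration.integral_cong[OF refl])
      fix y :: real
      show "indicator {0..1} y * (fou_kernel a b x y * \<phi> y) = (\<integral>u. (\<integral>v. F y u v \<partial>lborel) \<partial>lborel)"
      proof (cases "y \<in> {0..1}")
        case True
        have inner: "(LBINT v=0..y. exp (b * (x - u)) * exp (b * (y - v)) * c_alpha a * \<bar>u - v\<bar> powr - a)
            = (\<integral>v. indicator {0..y} v * (exp (b * (x - u)) * exp (b * (y - v)) * c_alpha a * \<bar>u - v\<bar> powr - a) \<partial>lborel)" for u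
          using True interval_integral_Icc[of 0 y "\<lambda>v. exp (b * (x - u)) * exp (b * (y - v)) * c_alpha a * \<bar>u - v\<bar> powr - a"]
          by (simp add: set_lebesgue_integral_def zero_ereal_def)
        have K: "fou_kernel a b x y = (\<integral>u. indicator {0..x} u * (\<integral>v. indicator {0..y} v * (exp (b * (x - u)) * exp (b * (y - v)) * c_alpha a * \<bar>u - v\<bar> powr - a) \<partial>lborel) \<partial>lborel)"
          unfolding fou_kernel_def inner
          using x interval_integral_Icc[of 0 x "\<lambda>u. (\<integral>v. indicator {0..y} v * (exp (b * (x - u)) * exp (b * (y - v)) * c_alpha a * \<bar>u - v\<bar> powr - a) \<partial>lborel)"]
          by (simp add: set_lebesgue_integral_def zero_ereal_def)
        have "indicator {0..1} y * (fou_kernel a b x y * \<phi> y) = fou_kernel a b x y * phi0 y"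
          by (simp add: phi0_def)
        also have "\<dots> = (\<integral>u. (\<integral>v. indicator {0..x} u * (indicator {0..y} v * (exp (b * (x - u)) * exp (b * (y - v)) * c_alpha a * \<bar>u - v\<bar> powr - a)) * phi0 y \<partial>lborel) \<partial>lborel)"
          unfolding K by (rule int2_mult)
        also have "\<dots> = (\<integral>u. (\<integral>v. F y u v \<partial>lborel) \<partial>lborel)"
          by (intro Bochner_Integration.integral_cong refl) (simp add: F_def indicator_def c_def mult_ac)
        finally show ?thesis .
      next
        case False
        thus ?thesis by (simp add: F_def phi0_def)
      qed
    qed
    finally show ?thesis .
  qed
  have RHS: "(\<integral>u. (\<integral>v. (\<integral>y. F y u v \<partial>lborel) \<partial>lborel) \<partial>lborel) = (\<integral>u. indicator {0..x} u * exp (b * (x - u)) * g u \<partial>lborel)"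
  proof (rule Bochner_Integration.integral_cong[OF refl])
    fix u :: real
    have "(\<integral>v. (\<integral>y. F y u v \<partial>lborel) \<partial>lborel) = (\<integral>v. (indicator {0..x} u * exp (b * (x - u)) * c) * (\<bar>u - v\<bar> powr (-a) * Psi0 v) \<partial>lborel)"
    proof (rule Bochner_Integration.integral_cong[OF refl])
      fix v :: real
      have "(\<integral>y. F y u v \<partial>lborel) = (\<integral>y. (indicator {0..x} u * exp (b * (x - u)) * c * \<bar>u - v\<bar> powr (-a)) * (indicator {0..1} v * (if v \<le> y then 1 else 0) * exp (b * (y - v)) * phi0 y) \<partial>lborel)"
        by (intro Bochner_Integration.integral_cong refl) (auto simp: F_def indicator_def phi0_def)
      also have "\<dots> = (indicator {0..x} u * exp (b * (x - u)) * c * \<bar>u - v\<bar> powr (-a)) * Psi0 v"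
        unfolding Psi0_repr by simp
      finally show "(\<integral>y. F y u v \<partial>lborel) = (indicator {0..x} u * exp (b * (x - u)) * c) * (\<bar>u - v\<bar> powr (-a) * Psi0 v)"
        by simp
    qed
    also have "\<dots> = indicator {0..x} u * exp (b * (x - u)) * g u"
      by (simp add: g_def)
    finally show "(\<integral>v. (\<integral>y. F y u v \<partial>lborel) \<partial>lborel) = indicator {0..x} u * exp (b * (x - u)) * g u" .
  qed
  show ?thesis using LHS fubini3[OF Fi] RHS by simp
qed

end

lemma integrable_sq_gen:
  fixes F :: "real \<Rightarrow> real \<Rightarrow> 'b::{banach,second_countable_topology}" and h :: "real \<Rightarrow> real"
  assumes m: "(\<lambda>(x,y). F x y) \<in> borel_measurable (lborel \<Otimes>\<^sub>M lborel)"
    and bnd: "\<And>x y. norm (F x y) \<le> K * indicator {0..1} x * h y"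
    and h: "\<And>y. 0 \<le> h y" and hm: "h \<in> borel_measurable borel"
    and hf: "(\<integral>\<^sup>+y. ennreal (h y) \<partial>lborel) < \<infinity>" and K: "0 \<le> K"
  shows "integrable (lborel \<Otimes>\<^sub>M lborel) (\<lambda>(x,y). F x y)"
proof (rule integrable2I[OF m])
  have "(\<integral>\<^sup>+x. (\<integral>\<^sup>+y. ennreal (norm (F x y)) \<partial>lborel) \<partial>lborel)
     \<le> (\<integral>\<^sup>+x. (\<integral>\<^sup>+y. ennreal (K * indicator {0..1} x) * ennreal (h y) \<partial>lborel) \<partial>(lborel::real measure))"
    using bnd K h by (intro nn_integral_mono) (simp add: ennreal_mult'[symmetric] ennreal_leI)
  also have "\<dots> = (\<integral>\<^sup>+x. ennreal (K * indicator {0..1} x) * (\<integral>\<^sup>+y. ennreal (h y) \<partial>lborel) \<partial>(lborel::real measure))"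
    by (intro nn_integral_cong nn_integral_cmult) (use hm in measurable)
  also have "\<dots> = (\<integral>\<^sup>+x. ((\<integral>\<^sup>+y. ennreal (h y) \<partial>lborel) * ennreal K) * indicator {0..1} x \<partial>(lborel::real measure))"
    using K by (intro nn_integral_cong) (auto simp: indicator_def mult.commute)
  also have "\<dots> = ((\<integral>\<^sup>+y. ennreal (h y) \<partial>lborel) * ennreal K) * emeasure lborel {0..1::real}"
    by (rule nn_integral_cmult_indicator) simp
  also have "\<dots> < \<infinity>" using hf by (simp add: ennreal_mult_less_top)
  finally show "(\<integral>\<^sup>+x. (\<integral>\<^sup>+y. ennreal (norm (F x y)) \<partial>lborel) \<partial>lborel) < \<infinity>" .
qed

lemma nn_ind01: "(\<integral>\<^sup>+y. ennreal (indicator {0..1::real} y) \<partial>lborel) < (\<infinity>::ennreal)"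
  by (subst ennreal_indicator, subst nn_integral_indicator) auto

context fou begin

lemma g_meas[measurable]: "g \<in> borel_measurable borel"
proof -
  have "(\<lambda>u. \<integral>v. \<bar>u - v\<bar> powr (-a) * Psi0 v \<partial>lborel) \<in> borel_measurable borel"
    by (rule lborel.borel_measurable_lebesgue_integral, rule meas2', measurable)
  thus ?thesis unfolding g_def by measurable
qed

lemma sing_int:
  assumes u: "0 \<le> u" "u \<le> 1"
  shows "integrable lborel (\<lambda>v. indicator {0..1} v * \<bar>u - v\<bar> powr (-a))"
    and "(\<integral>v. indicator {0..1} v * \<bar>u - v\<bar> powr (-a) \<partial>lborel) \<le> 2/(1-a)"
proof -
  have nn: "(\<integral>\<^sup>+v. ennreal (indicator {0..1} v * \<bar>u - v\<bar> powr (-a)) \<partial>lborel) \<le> ennreal (2/(1-a))"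
    by (rule nn_sing_u[OF a0 a1 u])
  show I: "integrable lborel (\<lambda>v. indicator {0..1} v * \<bar>u - v\<bar> powr (-a))"
    by (rule integrableI_nonneg) (use nn in \<open>auto simp: le_less_trans ennreal_less_top\<close>)
  have "ennreal (\<integral>v. indicator {0..1} v * \<bar>u - v\<bar> powr (-a) \<partial>lborel) = (\<integral>\<^sup>+v. ennreal (indicator {0..1} v * \<bar>u - v\<bar> powr (-a)) \<partial>lborel)"
    by (rule nn_integral_eq_integral[symmetric]) (use I in auto)
  with nn have "ennreal (\<integral>v. indicator {0..1} v * \<bar>u - v\<bar> powr (-a) \<partial>lborel) \<le> ennreal (2/(1-a))"
    by simp
  thus "(\<integral>v. indicator {0..1} v * \<bar>u - v\<bar> powr (-a) \<partial>lborel) \<le> 2/(1-a)"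
    using a1 by (subst (asm) ennreal_le_iff) auto
qed

definition "Mg = c * (exp \<bar>b\<bar> * N1) * (2/(1-a))"

lemma Mg_nonneg: "0 \<le> Mg"
  using c_pos N1_nonneg a1 by (simp add: Mg_def)

lemma g_bound:
  assumes u: "0 \<le> u" "u \<le> 1"
  shows "\<bar>g u\<bar> \<le> Mg"
proof -
  have Psi0_ind: "Psi0 v = indicator {0..1} v * Psi0 v" for v by (simp add: Psi0_def indicator_def)
  have I: "integrable lborel (\<lambda>v. (exp \<bar>b\<bar> * N1) * (indicator {0..1} v * \<bar>u - v\<bar> powr (-a)))"
    using sing_int(1)[OF u] by simp
  have bnd: "norm (\<bar>u - v\<bar> powr (-a) * Psi0 v) \<le> (exp \<bar>b\<bar> * N1) * (indicator {0..1} v * \<bar>u - v\<bar> powr (-a))" for v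
  proof -
    have "norm (\<bar>u - v\<bar> powr (-a) * Psi0 v) = indicator {0..1} v * \<bar>u - v\<bar> powr (-a) * \<bar>Psi0 v\<bar>"
      by (subst Psi0_ind) (simp add: abs_mult indicator_def)
    also have "\<dots> \<le> indicator {0..1} v * \<bar>u - v\<bar> powr (-a) * (exp \<bar>b\<bar> * N1)"
      by (intro mult_left_mono Psi0_bound) auto
    finally show ?thesis by (simp add: mult_ac)
  qed
  have I2: "integrable lborel (\<lambda>v. \<bar>u - v\<bar> powr (-a) * Psi0 v)"
    by (rule Bochner_Integration.integrable_bound[OF I]) (simp, intro AE_I2, rule order_trans[OF bnd], simp)
  have "\<bar>\<integral>v. \<bar>u - v\<bar> powr (-a) * Psi0 v \<partial>lborel\<bar> \<le> (\<integral>v. norm (\<bar>u - v\<bar> powr (-a) * Psi0 v) \<partial>lborel)"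
    using integral_norm_bound[of lborel "\<lambda>v. \<bar>u - v\<bar> powr (-a) * Psi0 v"] by simp
  also have "\<dots> \<le> (\<integral>v. (exp \<bar>b\<bar> * N1) * (indicator {0..1} v * \<bar>u - v\<bar> powr (-a)) \<partial>lborel)"
    by (rule integral_mono[OF _ I bnd]) (use I2 in auto)
  also have "\<dots> = (exp \<bar>b\<bar> * N1) * (\<integral>v. indicator {0..1} v * \<bar>u - v\<bar> powr (-a) \<partial>lborel)" by simp
  also have "\<dots> \<le> (exp \<bar>b\<bar> * N1) * (2/(1-a))"
    by (intro mult_left_mono sing_int(2)[OF u]) (use N1_nonneg in auto)
  finally have X: "\<bar>\<integral>v. \<bar>u - v\<bar> powr (-a) * Psi0 v \<partial>lborel\<bar> \<le> exp \<bar>b\<bar> * N1 * (2/(1-a))" .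
  have "\<bar>g u\<bar> = c * \<bar>\<integral>v. \<bar>u - v\<bar> powr (-a) * Psi0 v \<partial>lborel\<bar>"
    using c_pos by (simp add: g_def abs_mult)
  also have "\<dots> \<le> c * (exp \<bar>b\<bar> * N1 * (2/(1-a)))"
    using X c_pos by (intro mult_left_mono) auto
  finally show ?thesis by (simp add: Mg_def mult.assoc)
qed

lemma g_int_sq: "integrable lborel (\<lambda>u. indicator {0..1} u *\<^sub>R (k u * g u))"
  if "k \<in> borel_measurable borel" "\<And>u. u \<in> {0..1} \<Longrightarrow> \<bar>k u\<bar> \<le> K" for k :: "real \<Rightarrow> real" and K
proof (rule integrableI_bounded_set_indicator[where B="K * Mg"])
  show "(\<lambda>u. k u * g u) \<in> borel_measurable lborel" using that(1) by measurable
  show "AE x in lborel. x \<in> {0..1} \<longrightarrow> norm (k x * g x) \<le> K * Mg"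
  proof -
    have K0: "0 \<le> K" using order_trans[OF abs_ge_zero that(2)[of 0]] by simp
    show ?thesis
      using that(2) g_bound Mg_nonneg K0 by (intro AE_I2 impI) (auto simp: abs_mult intro!: mult_mono)
  qed
qed auto

definition "Gf x = (\<integral>u. indicator {0..x} u * (exp (- b * u) * g u) \<partial>lborel)"

lemma stepA': "0 \<le> x \<Longrightarrow> x \<le> 1 \<Longrightarrow> lam * \<phi> x = exp (b * x) * Gf x"
proof -
  assume x: "0 \<le> x" "x \<le> 1"
  have "lam * \<phi> x = (\<integral>u. indicator {0..x} u * exp (b * (x - u)) * g u \<partial>lborel)" by (rule stepA[OF x])
  also have "\<dots> = (\<integral>u. exp (b * x) * (indicator {0..x} u * (exp (- b * u) * g u)) \<partial>lborel)"
    by (intro Bochner_Integration.integral_cong refl) (simp add: algebra_simps exp_diff exp_minus field_simps)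
  also have "\<dots> = exp (b * x) * Gf x" by (simp add: Gf_def)
  finally show ?thesis .
qed

lemma neg_bu[simp]: "0 \<le> u \<Longrightarrow> u \<le> 1 \<Longrightarrow> - (b * u) \<le> \<bar>b\<bar>"
  using exp_bound01[of u "-b"] by simp

lemma exp_neg_bound: "u \<in> {0..1} \<Longrightarrow> \<bar>exp (- b * u)\<bar> \<le> exp \<bar>b\<bar>"
  using exp_bound01[of u "-b"] by simp

lemma h_integrable_on: "(\<lambda>u. exp (- b * u) * g u) integrable_on {0..1}"
proof -
  have "set_integrable lborel {0..1} (\<lambda>u. exp (- b * u) * g u)"
    unfolding set_integrable_def
    by (rule g_int_sq[where K="exp \<bar>b\<bar>"]) (simp_all add: exp_neg_bound)
  thus ?thesis by (rule set_borel_integral_eq_integral(1))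
qed

lemma Gf_eq: "0 \<le> x \<Longrightarrow> x \<le> 1 \<Longrightarrow> Gf x = integral {0..x} (\<lambda>u. exp (- b * u) * g u)"
proof -
  assume x: "0 \<le> x" "x \<le> 1"
  have S: "set_integrable lborel {0..1} (\<lambda>u. exp (- b * u) * g u)"
    unfolding set_integrable_def
    by (rule g_int_sq[where K="exp \<bar>b\<bar>"]) (simp_all add: exp_neg_bound)
  have S2: "set_integrable lborel {0..x} (\<lambda>u. exp (- b * u) * g u)"
    by (rule set_integrable_subset[OF S]) (use x in auto)
  have "Gf x = (LINT u:{0..x}|lborel. exp (- b * u) * g u)"
    by (simp add: Gf_def set_lebesgue_integral_def)
  also have "\<dots> = integral {0..x} (\<lambda>u. exp (- b * u) * g u)"
    by (rule set_borel_integral_eq_integral(2)[OF S2])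
  finally show ?thesis .
qed

lemma phi_cont: "continuous_on {0..1} \<phi>"
proof -
  have "continuous_on {0..1} (\<lambda>x. exp (b * x) * integral {0..x} (\<lambda>u. exp (- b * u) * g u) / lam)"
    by (intro continuous_intros indefinite_integral_continuous_1 h_integrable_on) (use lam in auto)
  moreover have "exp (b * x) * integral {0..x} (\<lambda>u. exp (- b * u) * g u) / lam = \<phi> x" if "x \<in> {0..1}" for x
  proof -
    have "lam * \<phi> x = exp (b * x) * integral {0..x} (\<lambda>u. exp (- b * u) * g u)"
      using stepA'[of x] Gf_eq[of x] that by simp
    thus ?thesis using lam by (simp add: field_simps)
  qed
  ultimately show ?thesis by (rule continuous_on_eq)
qed

end

lemma norm_exp_bound01: "0 \<le> x \<Longrightarrow> x \<le> 1 \<Longrightarrow> norm (exp (- w * complex_of_real x)) \<le> exp \<bar>Re w\<bar>"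
  using exp_bound01[of x "- Re w"] by simp

context fou begin

lemma phi0_k_int:
  fixes k :: "real \<Rightarrow> complex"
  assumes km: "k \<in> borel_measurable borel" and kb: "\<And>y. y \<in> {0..1} \<Longrightarrow> norm (k y) \<le> K"
  shows "integrable lborel (\<lambda>y. complex_of_real (phi0 y) * k y)"
proof -
  have K0: "0 \<le> K" using order_trans[OF norm_ge_zero kb[of 0]] by simp
  have I: "integrable lborel (\<lambda>y. K * \<bar>phi0 y\<bar>)" using phi0_int by auto
  show ?thesis
  proof (rule Bochner_Integration.integrable_bound[OF I])
    show "(\<lambda>y. complex_of_real (phi0 y) * k y) \<in> borel_measurable lborel" using km by measurable
    show "AE y in lborel. norm (complex_of_real (phi0 y) * k y) \<le> norm (K * \<bar>phi0 y\<bar>)"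
    proof (intro AE_I2)
      fix y
      show "norm (complex_of_real (phi0 y) * k y) \<le> norm (K * \<bar>phi0 y\<bar>)"
      proof (cases "y \<in> {0..1}")
        case True
        have "cmod (k y) * \<bar>phi0 y\<bar> \<le> K * \<bar>phi0 y\<bar>" by (rule mult_right_mono) (use kb[OF True] in auto)
        thus ?thesis using K0 by (simp add: norm_mult abs_mult mult.commute)
      next
        case False thus ?thesis by (simp add: phi0_def)
      qed
    qed
  qed
qed

lemma Lap_eq: "laplace01 \<phi> w = (\<integral>x. complex_of_real (phi0 x) * exp (- w * complex_of_real x) \<partial>lborel)"
proof -
  have "laplace01 \<phi> w = (LBINT x:{0..1}. exp (- w * complex_of_real x) * complex_of_real (\<phi> x))"
    unfolding laplace01_def
    using interval_integral_Icc[of 0 1 "\<lambda>x. exp (- w * complex_of_real x) * complex_of_real (\<phi> x)"]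
    by (simp add: zero_ereal_def one_ereal_def)
  also have "\<dots> = (\<integral>x. complex_of_real (phi0 x) * exp (- w * complex_of_real x) \<partial>lborel)"
    unfolding set_lebesgue_integral_def
    by (intro Bochner_Integration.integral_cong refl) (simp add: phi0_def indicator_def scaleR_conv_of_real)
  finally show ?thesis .
qed

definition "psihat w = (\<integral>x. complex_of_real (Psi0 x) * exp (- w * complex_of_real x) \<partial>lborel)"

lemma psihat_eq:
  assumes zb: "z + complex_of_real b \<noteq> 0"
  shows "psihat z = (laplace01 \<phi> (- complex_of_real b) - laplace01 \<phi> z) / (z + complex_of_real b)"
proof -
  have zb2: "- z \<noteq> complex_of_real b"
  proof
    assume "- z = complex_of_real b"
    hence "z + complex_of_real b = 0" by (metis add.right_inverse add.commute minus_minus)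
    with zb show False by simp
  qed
  define H where "H x y = complex_of_real (indicator {0..1} x * (if x \<le> y then 1 else 0) * exp (b * (y - x)) * phi0 y) * exp (- z * complex_of_real x)" for x y :: real
  have Hm: "(\<lambda>(x,y). H x y) \<in> borel_measurable (lborel \<Otimes>\<^sub>M lborel)"
    unfolding H_def by (rule meas2) measurable
  have Hb: "norm (H x y) \<le> (exp \<bar>b\<bar> * exp \<bar>Re z\<bar>) * indicator {0..1} x * \<bar>phi0 y\<bar>" for x y
  proof (cases "x \<in> {0..1} \<and> x \<le> y \<and> y \<le> 1")
    case True
    have e1: "exp (b * (y - x)) \<le> exp \<bar>b\<bar>" using True by (intro exp_bound01) auto
    have e2: "norm (exp (- z * complex_of_real x)) \<le> exp \<bar>Re z\<bar>" using True by (intro norm_exp_bound01) auto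
    have "norm (H x y) = exp (b * (y - x)) * \<bar>phi0 y\<bar> * norm (exp (- z * complex_of_real x))"
      using True by (simp add: H_def norm_mult abs_mult)
    also have "\<dots> \<le> exp \<bar>b\<bar> * \<bar>phi0 y\<bar> * exp \<bar>Re z\<bar>"
      using e1 e2 by (intro mult_mono) auto
    finally show ?thesis using True by (simp add: mult_ac)
  next
    case False thus ?thesis by (auto simp: H_def phi0_def indicator_def)
  qed
  have Hi: "integrable (lborel \<Otimes>\<^sub>M lborel) (\<lambda>(x,y). H x y)"
    by (rule integrable_sq_gen[OF Hm Hb]) (use phi0_int in \<open>auto simp: nn_phi0\<close>)
  have "psihat z = (\<integral>x. (\<integral>y. H x y \<partial>lborel) \<partial>lborel)"
    unfolding psihat_def H_def Psi0_repr
    by (intro Bochner_Integration.integral_cong refl) (simp only: integral_complex_of_real[symmetric] integral_mult_left_zero)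
  also have "\<dots> = (\<integral>y. (\<integral>x. H x y \<partial>lborel) \<partial>lborel)" by (rule fubini2[OF Hi])
  also have "\<dots> = (\<integral>y. (complex_of_real (phi0 y) * exp (complex_of_real b * y) - complex_of_real (phi0 y) * exp (- z * y)) / (z + complex_of_real b) \<partial>lborel)"
  proof (rule Bochner_Integration.integral_cong[OF refl])
    fix y :: real
    show "(\<integral>x. H x y \<partial>lborel) = (complex_of_real (phi0 y) * exp (complex_of_real b * y) - complex_of_real (phi0 y) * exp (- z * y)) / (z + complex_of_real b)"
    proof (cases "y \<in> {0..1}")
      case True
      have "(\<integral>x. H x y \<partial>lborel) = (\<integral>x. complex_of_real (phi0 y * exp (b * y)) * (indicator {0..y} x *\<^sub>R exp (- (z + complex_of_real b) * complex_of_real x)) \<partial>lborel)"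
      proof (intro Bochner_Integration.integral_cong refl)
        fix x
        show "H x y = complex_of_real (phi0 y * exp (b * y)) * (indicator {0..y} x *\<^sub>R exp (- (z + complex_of_real b) * complex_of_real x))"
          using True by (auto simp: H_def indicator_def exp_diff exp_of_real[symmetric] exp_add[symmetric] algebra_simps exp_minus)
      qed
      also have "\<dots> = complex_of_real (phi0 y * exp (b * y)) * ((exp (- (z + complex_of_real b) * y) - exp (- (z + complex_of_real b) * 0)) / (- (z + complex_of_real b)))"
        using True zb zb2 by (subst integral_mult_right_zero, subst exp_int) auto
      also have "\<dots> = (complex_of_real (phi0 y) * exp (complex_of_real b * y) - complex_of_real (phi0 y) * exp (- z * y)) / (z + complex_of_real b)"
      proof -
        have alg: "P * E1 * ((E2 - 1) / (- w)) = (P * E1 - P * (E1 * E2)) / w" if "w \<noteq> 0" for P E1 E2 w :: complex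
          using that by (simp add: field_simps)
        have E: "exp (complex_of_real b * y) * exp (- (z + complex_of_real b) * y) = exp (- z * y)"
          by (simp add: exp_add[symmetric] algebra_simps)
        have E1: "complex_of_real (phi0 y * exp (b * y)) = complex_of_real (phi0 y) * exp (complex_of_real b * y)"
          by (simp add: exp_of_real[symmetric])
        show ?thesis unfolding E1
          by (simp only: mult_zero_right exp_zero alg[OF zb] E)
      qed
      finally show ?thesis .
    next
      case False thus ?thesis by (simp add: H_def phi0_def)
    qed
  qed
  also have "\<dots> = ((\<integral>y. complex_of_real (phi0 y) * exp (complex_of_real b * y) \<partial>lborel) - (\<integral>y. complex_of_real (phi0 y) * exp (- z * y) \<partial>lborel)) / (z + complex_of_real b)"
  proof -
    have i1: "integrable lborel (\<lambda>y. complex_of_real (phi0 y) * exp (complex_of_real b * y))"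
      by (rule phi0_k_int[where K="exp \<bar>b\<bar>"]) (measurable, use norm_exp_bound01[of _ "- complex_of_real b"] in auto)
    have i2: "integrable lborel (\<lambda>y. complex_of_real (phi0 y) * exp (- z * y))"
      by (rule phi0_k_int[where K="exp \<bar>Re z\<bar>"]) (measurable, use norm_exp_bound01 in auto)
    show ?thesis using i1 i2 by simp
  qed
  also have "\<dots> = (laplace01 \<phi> (- complex_of_real b) - laplace01 \<phi> z) / (z + complex_of_real b)"
    by (simp add: Lap_eq)
  finally show ?thesis .
qed

end

context fou begin

lemma g_k_int:
  fixes k :: "real \<Rightarrow> complex"
  assumes km: "k \<in> borel_measurable borel" and kb: "\<And>y. y \<in> {0..1} \<Longrightarrow> norm (k y) \<le> K"
  shows "integrable lborel (\<lambda>y. complex_of_real (indicator {0..1} y * g y) * k y)"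
proof -
  have K0: "0 \<le> K" using order_trans[OF norm_ge_zero kb[of 0]] by simp
  have I: "integrable lborel (\<lambda>y. indicator {0..1::real} y *\<^sub>R (K * Mg))"
    by (rule integrableI_bounded_set_indicator[where B="K * Mg"]) (use K0 Mg_nonneg in auto)
  show ?thesis
  proof (rule Bochner_Integration.integrable_bound[OF I])
    show "(\<lambda>y. complex_of_real (indicator {0..1} y * g y) * k y) \<in> borel_measurable lborel" using km by measurable
    show "AE y in lborel. norm (complex_of_real (indicator {0..1} y * g y) * k y) \<le> norm (indicator {0..1} y *\<^sub>R (K * Mg))"
    proof (intro AE_I2)
      fix y
      show "norm (complex_of_real (indicator {0..1} y * g y) * k y) \<le> norm (indicator {0..1} y *\<^sub>R (K * Mg))"
      proof (cases "y \<in> {0..1}")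
        case True
        have "\<bar>g y\<bar> * cmod (k y) \<le> Mg * K" using True g_bound[of y] kb[OF True] by (intro mult_mono) auto
        thus ?thesis using True K0 Mg_nonneg by (simp add: norm_mult abs_mult mult.commute)
      next
        case False thus ?thesis by simp
      qed
    qed
  qed
qed

definition "ghat w = (\<integral>u. complex_of_real (indicator {0..1} u * g u) * exp (- w * complex_of_real u) \<partial>lborel)"

lemma lam_Lap:
  assumes bz: "complex_of_real b - z \<noteq> 0"
  shows "complex_of_real lam * laplace01 \<phi> z = (\<integral>u. complex_of_real (indicator {0..1} u * g u * exp (- b * u)) * ((exp (complex_of_real b - z) - exp ((complex_of_real b - z) * complex_of_real u)) / (complex_of_real b - z)) \<partial>lborel)"
proof -
  define H where "H x u = complex_of_real (indicator {0..1} x * indicator {0..x} u * exp (b * (x - u)) * g u) * exp (- z * complex_of_real x)" for x u :: real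
  have Hm: "(\<lambda>(x,u). H x u) \<in> borel_measurable (lborel \<Otimes>\<^sub>M lborel)"
  proof -
    have "H x u = complex_of_real (indicator {0..1} x * (if 0 \<le> u \<and> u \<le> x then 1 else 0) * exp (b * (x - u)) * g u) * exp (- z * complex_of_real x)" for x u
      by (simp add: H_def indicator_def)
    hence "(\<lambda>(x,u). H x u) = (\<lambda>(x,u). complex_of_real (indicator {0..1} x * (if 0 \<le> u \<and> u \<le> x then 1 else 0) * exp (b * (x - u)) * g u) * exp (- z * complex_of_real x))"
      by (intro ext) auto
    also have "\<dots> \<in> borel_measurable (lborel \<Otimes>\<^sub>M lborel)" by (rule meas2) measurable
    finally show ?thesis .
  qed
  have Hb: "norm (H x u) \<le> (exp \<bar>b\<bar> * Mg * exp \<bar>Re z\<bar>) * indicator {0..1} x * indicator {0..1} u" for x u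
  proof (cases "x \<in> {0..1} \<and> u \<in> {0..x}")
    case True
    have e1: "exp (b * (x - u)) \<le> exp \<bar>b\<bar>" using True by (intro exp_bound01) auto
    have e2: "norm (exp (- z * complex_of_real x)) \<le> exp \<bar>Re z\<bar>" using True by (intro norm_exp_bound01) auto
    have gb: "\<bar>g u\<bar> \<le> Mg" using True by (intro g_bound) auto
    have "norm (H x u) = exp (b * (x - u)) * \<bar>g u\<bar> * norm (exp (- z * complex_of_real x))"
      using True by (simp add: H_def norm_mult abs_mult)
    also have "\<dots> \<le> exp \<bar>b\<bar> * Mg * exp \<bar>Re z\<bar>"
      using e1 e2 gb by (intro mult_mono) auto
    finally show ?thesis using True by (simp add: indicator_def)
  next
    case False thus ?thesis using Mg_nonneg by (auto simp: H_def indicator_def)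
  qed
  have Hi: "integrable (lborel \<Otimes>\<^sub>M lborel) (\<lambda>(x,u). H x u)"
    by (rule integrable_sq_gen[OF Hm Hb]) (use Mg_nonneg nn_ind01 in auto)
  have "complex_of_real lam * laplace01 \<phi> z = (\<integral>x. (\<integral>u. H x u \<partial>lborel) \<partial>lborel)"
  proof -
    have "complex_of_real lam * laplace01 \<phi> z = (\<integral>x. complex_of_real (lam * phi0 x) * exp (- z * complex_of_real x) \<partial>lborel)"
      unfolding Lap_eq by (simp add: mult.assoc)
    also have "\<dots> = (\<integral>x. (\<integral>u. H x u \<partial>lborel) \<partial>lborel)"
    proof (rule Bochner_Integration.integral_cong[OF refl])
      fix x :: real
      show "complex_of_real (lam * phi0 x) * exp (- z * complex_of_real x) = (\<integral>u. H x u \<partial>lborel)"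
      proof (cases "x \<in> {0..1}")
        case True
        hence "lam * phi0 x = (\<integral>u. indicator {0..x} u * exp (b * (x - u)) * g u \<partial>lborel)"
          using stepA[of x] by (simp add: phi0_def)
        hence "complex_of_real (lam * phi0 x) * exp (- z * complex_of_real x) = (\<integral>u. complex_of_real (indicator {0..x} u * exp (b * (x - u)) * g u) * exp (- z * complex_of_real x) \<partial>lborel)"
          by (simp only: integral_complex_of_real[symmetric] integral_mult_left_zero)
        also have "\<dots> = (\<integral>u. H x u \<partial>lborel)"
          using True by (intro Bochner_Integration.integral_cong refl) (simp add: H_def)
        finally show ?thesis .
      next
        case False thus ?thesis by (simp add: H_def phi0_def)
      qed
    qed
    finally show ?thesis .
  qed
  also have "\<dots> = (\<integral>u. (\<integral>x. H x u \<partial>lborel) \<partial>lborel)" by (rule fubini2[OF Hi])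
  also have "\<dots> = (\<integral>u. complex_of_real (indicator {0..1} u * g u * exp (- b * u)) * ((exp (complex_of_real b - z) - exp ((complex_of_real b - z) * complex_of_real u)) / (complex_of_real b - z)) \<partial>lborel)"
  proof (rule Bochner_Integration.integral_cong[OF refl])
    fix u :: real
    show "(\<integral>x. H x u \<partial>lborel) = complex_of_real (indicator {0..1} u * g u * exp (- b * u)) * ((exp (complex_of_real b - z) - exp ((complex_of_real b - z) * complex_of_real u)) / (complex_of_real b - z))"
    proof (cases "u \<in> {0..1}")
      case True
      have "(\<integral>x. H x u \<partial>lborel) = (\<integral>x. complex_of_real (g u * exp (- b * u)) * (indicator {u..1} x *\<^sub>R exp ((complex_of_real b - z) * complex_of_real x)) \<partial>lborel)"
      proof (intro Bochner_Integration.integral_cong refl)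
        fix x :: real
        have ind: "indicator {0..1} x * indicator {0..x} u = (indicator {u..1} x :: real)"
          using True by (auto simp: indicator_def)
        have ex: "complex_of_real (exp (b * (x - u))) * exp (- z * complex_of_real x) = complex_of_real (exp (- b * u)) * exp ((complex_of_real b - z) * complex_of_real x)"
          by (simp add: exp_of_real[symmetric] exp_add[symmetric] algebra_simps)
        have "H x u = complex_of_real (indicator {0..1} x * indicator {0..x} u) * complex_of_real (g u) * (complex_of_real (exp (b * (x - u))) * exp (- z * complex_of_real x))"
          by (simp add: H_def mult_ac)
        also have "\<dots> = complex_of_real (g u * exp (- b * u)) * (indicator {u..1} x *\<^sub>R exp ((complex_of_real b - z) * complex_of_real x))"
          unfolding ind ex by (simp add: scaleR_conv_of_real mult_ac)
        finally show "H x u = complex_of_real (g u * exp (- b * u)) * (indicator {u..1} x *\<^sub>R exp ((complex_of_real b - z) * complex_of_real x))" .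
      qed
      also have "\<dots> = complex_of_real (g u * exp (- b * u)) * ((exp ((complex_of_real b - z) * complex_of_real 1) - exp ((complex_of_real b - z) * complex_of_real u)) / (complex_of_real b - z))"
        using True bz by (subst integral_mult_right_zero, subst exp_int) auto
      finally show ?thesis using True by simp
    next
      case False
      hence "H x u = 0" for x by (auto simp: H_def indicator_def)
      thus ?thesis using False by simp
    qed
  qed
  finally show ?thesis .
qed

lemma stepC:
  assumes bz: "complex_of_real b - z \<noteq> 0"
  shows "ghat z = (z - complex_of_real b) * complex_of_real lam * laplace01 \<phi> z + exp (- z) * complex_of_real (lam * \<phi> 1)"
proof -
  have i1: "integrable lborel (\<lambda>u. complex_of_real (indicator {0..1} u * g u) * exp (- z * complex_of_real u))"
    by (rule g_k_int[where K="exp \<bar>Re z\<bar>"]) (measurable, use norm_exp_bound01 in auto)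
  have i2: "integrable lborel (\<lambda>u. complex_of_real (indicator {0..1} u * g u) * complex_of_real (exp (b * (1 - u))))"
    by (rule g_k_int[where K="exp \<bar>b\<bar>"]) (measurable, use exp_bound01 in auto)
  have "(complex_of_real b - z) * (complex_of_real lam * laplace01 \<phi> z)
      = (\<integral>u. exp (- z) * (complex_of_real (indicator {0..1} u * g u) * complex_of_real (exp (b * (1 - u))))
             - complex_of_real (indicator {0..1} u * g u) * exp (- z * complex_of_real u) \<partial>lborel)"
    unfolding lam_Lap[OF bz]
  proof (subst integral_mult_right_zero[symmetric], intro Bochner_Integration.integral_cong refl)
    fix u :: real
    have e1: "exp (complex_of_real b - z) * complex_of_real (exp (- b * u)) = exp (- z) * complex_of_real (exp (b * (1 - u)))"
      by (simp add: exp_of_real[symmetric] exp_add[symmetric] algebra_simps)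
    have e2: "complex_of_real (exp (- b * u)) * exp ((complex_of_real b - z) * complex_of_real u) = exp (- z * complex_of_real u)"
      by (simp add: exp_of_real[symmetric] exp_add[symmetric] algebra_simps)
    have "(complex_of_real b - z) * (complex_of_real (indicator {0..1} u * g u * exp (- b * u)) * ((exp (complex_of_real b - z) - exp ((complex_of_real b - z) * complex_of_real u)) / (complex_of_real b - z)))
        = complex_of_real (indicator {0..1} u * g u) * (exp (complex_of_real b - z) * complex_of_real (exp (- b * u)) - complex_of_real (exp (- b * u)) * exp ((complex_of_real b - z) * complex_of_real u))"
      using bz by (simp add: field_simps)
    also have "\<dots> = exp (- z) * (complex_of_real (indicator {0..1} u * g u) * complex_of_real (exp (b * (1 - u))))
             - complex_of_real (indicator {0..1} u * g u) * exp (- z * complex_of_real u)"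
      unfolding e1 e2 by (simp add: algebra_simps)
    finally show "(complex_of_real b - z) * (complex_of_real (indicator {0..1} u * g u * exp (- b * u)) * ((exp (complex_of_real b - z) - exp ((complex_of_real b - z) * complex_of_real u)) / (complex_of_real b - z)))
        = exp (- z) * (complex_of_real (indicator {0..1} u * g u) * complex_of_real (exp (b * (1 - u))))
             - complex_of_real (indicator {0..1} u * g u) * exp (- z * complex_of_real u)" .
  qed
  also have "\<dots> = exp (- z) * (\<integral>u. complex_of_real (indicator {0..1} u * g u) * complex_of_real (exp (b * (1 - u))) \<partial>lborel) - ghat z"
    using i1 i2 by (simp add: ghat_def)
  also have "(\<integral>u. complex_of_real (indicator {0..1} u * g u) * complex_of_real (exp (b * (1 - u))) \<partial>lborel) = complex_of_real (lam * \<phi> 1)"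
  proof -
    have "lam * \<phi> 1 = (\<integral>u. indicator {0..1} u * exp (b * (1 - u)) * g u \<partial>lborel)" using stepA[of 1] by simp
    thus ?thesis by (simp only: integral_complex_of_real[symmetric] of_real_mult mult_ac)
  qed
  finally have "(complex_of_real b - z) * (complex_of_real lam * laplace01 \<phi> z) = exp (- z) * complex_of_real (lam * \<phi> 1) - ghat z" .
  thus ?thesis by (simp add: algebra_simps)
qed

end

lemma gamma_int:
  fixes a s :: real assumes a: "0 < a" and s: "0 < s"
  shows "integrable lborel (\<lambda>t. indicator {0<..} t * t powr (a - 1) * exp (- (t * s)))"
    and "(\<integral>t. indicator {0<..} t * t powr (a - 1) * exp (- (t * s)) \<partial>lborel) = Gamma a * s powr (- a)"
proof -
  have nn: "(\<integral>\<^sup>+t. ennreal (indicator {0<..} t * t powr (a - 1) * exp (- (t * s))) \<partial>lborel) = ennreal (Gamma a * s powr (- a))"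
    by (rule nn_gamma[OF a s])
  show I: "integrable lborel (\<lambda>t. indicator {0<..} t * t powr (a - 1) * exp (- (t * s)))"
    by (rule integrableI_nonneg) (auto simp: nn)
  have "ennreal (\<integral>t. indicator {0<..} t * t powr (a - 1) * exp (- (t * s)) \<partial>lborel) = ennreal (Gamma a * s powr (- a))"
    using nn_integral_eq_integral[OF I] nn by simp
  thus "(\<integral>t. indicator {0<..} t * t powr (a - 1) * exp (- (t * s)) \<partial>lborel) = Gamma a * s powr (- a)"
    using Gamma_real_pos[OF a] by (subst (asm) ennreal_inj) (auto intro!: integral_nonneg_AE)
qed

lemma exp_split_int:
  fixes t :: real and z :: complex
  assumes t: "0 < t" and tz: "complex_of_real t - z \<noteq> 0" "complex_of_real t + z \<noteq> 0" and v: "0 \<le> v" "v \<le> 1"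
  shows "(\<integral>u. complex_of_real (indicator {0..1} u * exp (- (t * \<bar>u - v\<bar>))) * exp (- z * complex_of_real u) \<partial>lborel)
    = (exp (- z * v) - complex_of_real (exp (- (t * v)))) / (complex_of_real t - z)
    + (exp (- z * v) - exp (- z) * complex_of_real (exp (- (t * (1 - v))))) / (complex_of_real t + z)"
proof -
  define A where "A u = indicator {0..v} u *\<^sub>R (complex_of_real (exp (- (t * v))) * exp ((complex_of_real t - z) * complex_of_real u))" for u :: real
  define B where "B u = indicator {v..1} u *\<^sub>R (complex_of_real (exp (t * v)) * exp ((- (complex_of_real t + z)) * complex_of_real u))" for u :: real
  have IA: "integrable lborel A"
    unfolding A_def by (intro integrable_mult_right borel_integrable_compact) (auto intro!: continuous_intros)
  have IB: "integrable lborel B"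
    unfolding B_def by (intro integrable_mult_right borel_integrable_compact) (auto intro!: continuous_intros)
  have "(\<integral>u. complex_of_real (indicator {0..1} u * exp (- (t * \<bar>u - v\<bar>))) * exp (- z * complex_of_real u) \<partial>lborel)
      = (\<integral>u. A u + B u \<partial>lborel)"
  proof (rule integral_cong_AE)
    show "(\<lambda>u. complex_of_real (indicator {0..1} u * exp (- (t * \<bar>u - v\<bar>))) * exp (- z * complex_of_real u)) \<in> borel_measurable lborel"
      by measurable
    show "(\<lambda>u. A u + B u) \<in> borel_measurable lborel" using IA IB by auto
    show "AE u in lborel. complex_of_real (indicator {0..1} u * exp (- (t * \<bar>u - v\<bar>))) * exp (- z * complex_of_real u) = A u + B u"
      using AE_lborel_singleton[of v]
    proof eventually_elim
      case (elim u)
      show ?case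
      proof (cases "u < v")
        case True
        have "complex_of_real (exp (- (t * \<bar>u - v\<bar>))) * exp (- z * complex_of_real u) = complex_of_real (exp (- (t * v))) * exp ((complex_of_real t - z) * complex_of_real u)"
          using True by (simp add: exp_of_real[symmetric] exp_add[symmetric] algebra_simps)
        thus ?thesis using True v by (auto simp: A_def B_def indicator_def)
      next
        case False
        hence F: "v < u" using elim by simp
        have "complex_of_real (exp (- (t * \<bar>u - v\<bar>))) * exp (- z * complex_of_real u) = complex_of_real (exp (t * v)) * exp ((- (complex_of_real t + z)) * complex_of_real u)"
          using F by (simp add: exp_of_real[symmetric] exp_add[symmetric] algebra_simps)
        thus ?thesis using F v by (auto simp: A_def B_def indicator_def)
      qed
    qed
  qed
  also have "\<dots> = (\<integral>u. A u \<partial>lborel) + (\<integral>u. B u \<partial>lborel)" using IA IB by simp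
  also have "(\<integral>u. A u \<partial>lborel) = complex_of_real (exp (- (t * v))) * ((exp ((complex_of_real t - z) * v) - exp ((complex_of_real t - z) * 0)) / (complex_of_real t - z))"
    unfolding A_def by (simp only: mult_scaleR_right[symmetric] integral_mult_right_zero, subst exp_int) (use tz v in auto)
  also have "\<dots> = (exp (- z * v) - complex_of_real (exp (- (t * v)))) / (complex_of_real t - z)"
    by (simp add: exp_of_real[symmetric] exp_add[symmetric] algebra_simps diff_divide_distrib)
  also have "(\<integral>u. B u \<partial>lborel) = complex_of_real (exp (t * v)) * ((exp ((- (complex_of_real t + z)) * 1) - exp ((- (complex_of_real t + z)) * v)) / (- (complex_of_real t + z)))"
    unfolding B_def by (simp only: mult_scaleR_right[symmetric] integral_mult_right_zero, subst exp_int) (use tz v in auto)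
  also have "\<dots> = (exp (- z * v) - exp (- z) * complex_of_real (exp (- (t * (1 - v))))) / (complex_of_real t + z)"
  proof -
    have e1: "complex_of_real (exp (t * v)) * exp ((- (complex_of_real t + z)) * 1) = exp (- z) * complex_of_real (exp (- (t * (1 - v))))"
      by (simp add: exp_of_real[symmetric] exp_add[symmetric] algebra_simps)
    have e2: "complex_of_real (exp (t * v)) * exp ((- (complex_of_real t + z)) * v) = exp (- z * v)"
      by (simp add: exp_of_real[symmetric] exp_add[symmetric] algebra_simps)
    have alg: "P * ((X - Y) / (- w)) = (P * Y - P * X) / w" for P X Y w :: complex
      by (cases "w = 0") (simp_all add: field_simps)
    show ?thesis unfolding alg e1 e2 ..
  qed
  finally show ?thesis .
qed

context fou begin

definition "MP = exp \<bar>b\<bar> * N1"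

lemma MP_nonneg: "0 \<le> MP" using N1_nonneg by (simp add: MP_def)

lemma Psi0_bound': "\<bar>Psi0 v\<bar> \<le> MP * indicator {0..1} v"
  using Psi0_bound[of v] by (auto simp: MP_def Psi0_def indicator_def)

lemma Psi0_k_int:
  fixes k :: "real \<Rightarrow> complex"
  assumes km: "k \<in> borel_measurable borel" and kb: "\<And>y. y \<in> {0..1} \<Longrightarrow> norm (k y) \<le> K"
  shows "integrable lborel (\<lambda>y. complex_of_real (Psi0 y) * k y)"
proof -
  have K0: "0 \<le> K" using order_trans[OF norm_ge_zero kb[of 0]] by simp
  have I: "integrable lborel (\<lambda>y. indicator {0..1::real} y *\<^sub>R (K * MP))"
    by (rule integrableI_bounded_set_indicator[where B="K * MP"]) (use K0 MP_nonneg in auto)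
  show ?thesis
  proof (rule Bochner_Integration.integrable_bound[OF I])
    show "(\<lambda>y. complex_of_real (Psi0 y) * k y) \<in> borel_measurable lborel" using km by measurable
    show "AE y in lborel. norm (complex_of_real (Psi0 y) * k y) \<le> norm (indicator {0..1} y *\<^sub>R (K * MP))"
    proof (intro AE_I2)
      fix y
      show "norm (complex_of_real (Psi0 y) * k y) \<le> norm (indicator {0..1} y *\<^sub>R (K * MP))"
      proof (cases "y \<in> {0..1}")
        case True
        have "\<bar>Psi0 y\<bar> * cmod (k y) \<le> MP * K" using True Psi0_bound'[of y] kb[OF True] MP_nonneg by (intro mult_mono) auto
        thus ?thesis using True K0 MP_nonneg by (simp add: norm_mult abs_mult mult.commute)
      next
        case False thus ?thesis by (simp add: Psi0_def)
      qed
    qed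
  qed
qed

definition "U0 t = (\<integral>v. Psi0 v * exp (- (t * v)) \<partial>lborel)"
definition "U1 t = (\<integral>v. Psi0 v * exp (- (t * (1 - v))) \<partial>lborel)"

lemma inner_t:
  assumes t: "0 < t" and tz: "complex_of_real t - z \<noteq> 0" "complex_of_real t + z \<noteq> 0"
  shows "(\<integral>u. (\<integral>v. complex_of_real (indicator {0..1} u * Psi0 v * exp (- (t * \<bar>u - v\<bar>))) * exp (- z * complex_of_real u) \<partial>lborel) \<partial>lborel)
    = (psihat z - complex_of_real (U0 t)) / (complex_of_real t - z) + (psihat z - exp (- z) * complex_of_real (U1 t)) / (complex_of_real t + z)"
proof -
  define G where "G u v = complex_of_real (indicator {0..1} u * Psi0 v * exp (- (t * \<bar>u - v\<bar>))) * exp (- z * complex_of_real u)" for u v :: real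
  have Gm: "(\<lambda>(u,v). G u v) \<in> borel_measurable (lborel \<Otimes>\<^sub>M lborel)"
    unfolding G_def by (rule meas2) measurable
  have Gb: "norm (G u v) \<le> (MP * exp \<bar>Re z\<bar>) * indicator {0..1} u * indicator {0..1} v" for u v
  proof (cases "u \<in> {0..1}")
    case True
    have e2: "norm (exp (- z * complex_of_real u)) \<le> exp \<bar>Re z\<bar>" using True by (intro norm_exp_bound01) auto
    have e1: "exp (- (t * \<bar>u - v\<bar>)) \<le> 1" using t by simp
    have "norm (G u v) = \<bar>Psi0 v\<bar> * exp (- (t * \<bar>u - v\<bar>)) * norm (exp (- z * complex_of_real u))"
      using True by (simp add: G_def norm_mult abs_mult)
    also have "\<dots> \<le> (MP * indicator {0..1} v) * 1 * exp \<bar>Re z\<bar>"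
      using e1 e2 Psi0_bound'[of v] MP_nonneg by (intro mult_mono) auto
    finally show ?thesis using True by (simp add: mult_ac)
  next
    case False thus ?thesis using MP_nonneg by (simp add: G_def)
  qed
  have Gi: "integrable (lborel \<Otimes>\<^sub>M lborel) (\<lambda>(u,v). G u v)"
    by (rule integrable_sq_gen[OF Gm Gb]) (use MP_nonneg nn_ind01 in auto)
  have "(\<integral>u. (\<integral>v. G u v \<partial>lborel) \<partial>lborel) = (\<integral>v. (\<integral>u. G u v \<partial>lborel) \<partial>lborel)"
    by (rule fubini2[OF Gi])
  also have "\<dots> = (\<integral>v. (complex_of_real (Psi0 v) * exp (- z * v) - complex_of_real (Psi0 v * exp (- (t * v)))) / (complex_of_real t - z)
      + (complex_of_real (Psi0 v) * exp (- z * v) - exp (- z) * complex_of_real (Psi0 v * exp (- (t * (1 - v))))) / (complex_of_real t + z) \<partial>lborel)"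
  proof (rule Bochner_Integration.integral_cong[OF refl])
    fix v :: real
    show "(\<integral>u. G u v \<partial>lborel) = (complex_of_real (Psi0 v) * exp (- z * v) - complex_of_real (Psi0 v * exp (- (t * v)))) / (complex_of_real t - z)
      + (complex_of_real (Psi0 v) * exp (- z * v) - exp (- z) * complex_of_real (Psi0 v * exp (- (t * (1 - v))))) / (complex_of_real t + z)"
    proof (cases "v \<in> {0..1}")
      case True
      have "(\<integral>u. G u v \<partial>lborel) = complex_of_real (Psi0 v) * (\<integral>u. complex_of_real (indicator {0..1} u * exp (- (t * \<bar>u - v\<bar>))) * exp (- z * complex_of_real u) \<partial>lborel)"
        by (subst integral_mult_right_zero[symmetric], intro Bochner_Integration.integral_cong refl) (simp add: G_def mult_ac)
      also have "\<dots> = complex_of_real (Psi0 v) * ((exp (- z * v) - complex_of_real (exp (- (t * v)))) / (complex_of_real t - z)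
          + (exp (- z * v) - exp (- z) * complex_of_real (exp (- (t * (1 - v))))) / (complex_of_real t + z))"
        using True by (subst exp_split_int[OF t tz]) auto
      also have "\<dots> = (complex_of_real (Psi0 v) * exp (- z * v) - complex_of_real (Psi0 v * exp (- (t * v)))) / (complex_of_real t - z)
      + (complex_of_real (Psi0 v) * exp (- z * v) - exp (- z) * complex_of_real (Psi0 v * exp (- (t * (1 - v))))) / (complex_of_real t + z)"
        by (simp add: algebra_simps add_divide_distrib diff_divide_distrib)
      finally show ?thesis .
    next
      case False thus ?thesis by (simp add: G_def Psi0_def)
    qed
  qed
  also have "\<dots> = (psihat z - complex_of_real (U0 t)) / (complex_of_real t - z) + (psihat z - exp (- z) * complex_of_real (U1 t)) / (complex_of_real t + z)"
  proof -
    have i1: "integrable lborel (\<lambda>v. complex_of_real (Psi0 v) * exp (- z * v))"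
      by (rule Psi0_k_int[where K="exp \<bar>Re z\<bar>"]) (measurable, use norm_exp_bound01 in auto)
    have i2: "integrable lborel (\<lambda>v. complex_of_real (Psi0 v) * complex_of_real (exp (- (t * v))))"
      by (rule Psi0_k_int[where K=1]) (measurable, use t in auto)
    have i3: "integrable lborel (\<lambda>v. complex_of_real (Psi0 v) * complex_of_real (exp (- (t * (1 - v)))))"
      by (rule Psi0_k_int[where K=1]) (measurable, use t in auto)
    have U0c: "complex_of_real (U0 t) = (\<integral>v. complex_of_real (Psi0 v) * complex_of_real (exp (- (t * v))) \<partial>lborel)"
      by (simp only: U0_def integral_complex_of_real[symmetric] of_real_mult)
    have U1c: "complex_of_real (U1 t) = (\<integral>v. complex_of_real (Psi0 v) * complex_of_real (exp (- (t * (1 - v)))) \<partial>lborel)"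
      by (simp only: U1_def integral_complex_of_real[symmetric] of_real_mult)
    show ?thesis unfolding U0c U1c psihat_def of_real_mult
      using i1 i2 i3 by (simp add: integral_divide_zero)
  qed
  finally show ?thesis unfolding G_def .
qed

end

context fou begin

definition "Rv u v = (\<integral>t. indicator {0<..} t * t powr (a - 1) * exp (- (t * \<bar>u - v\<bar>)) \<partial>lborel)"

lemma Rv_eq: "u \<noteq> v \<Longrightarrow> Rv u v = Gamma a * \<bar>u - v\<bar> powr (- a)"
  unfolding Rv_def by (rule gamma_int(2)[OF a0]) simp

lemma Gamma_g: "Gamma a * g u = c * (\<integral>v. Rv u v * Psi0 v \<partial>lborel)"
proof -
  have "Gamma a * g u = c * (\<integral>v. Gamma a * \<bar>u - v\<bar> powr (- a) * Psi0 v \<partial>lborel)"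
    by (simp add: g_def mult_ac)
  also have "(\<integral>v. Gamma a * \<bar>u - v\<bar> powr (- a) * Psi0 v \<partial>lborel) = (\<integral>v. Rv u v * Psi0 v \<partial>lborel)"
  proof (rule integral_cong_AE)
    show "(\<lambda>v. Gamma a * \<bar>u - v\<bar> powr (- a) * Psi0 v) \<in> borel_measurable lborel" by measurable
    have "(\<lambda>v. Rv u v) \<in> borel_measurable borel"
      unfolding Rv_def by (rule lborel.borel_measurable_lebesgue_integral, rule meas2', measurable)
    thus "(\<lambda>v. Rv u v * Psi0 v) \<in> borel_measurable lborel" by measurable
    show "AE v in lborel. Gamma a * \<bar>u - v\<bar> powr (- a) * Psi0 v = Rv u v * Psi0 v"
      using AE_lborel_singleton[of u] by eventually_elim (simp add: Rv_eq)
  qed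
  finally show ?thesis .
qed

lemma stepD:
  assumes tz: "\<And>t. 0 < t \<Longrightarrow> complex_of_real t - z \<noteq> 0" "\<And>t. 0 < t \<Longrightarrow> complex_of_real t + z \<noteq> 0"
  shows "complex_of_real (Gamma a) * ghat z = complex_of_real c * (\<integral>t. complex_of_real (indicator {0<..} t * t powr (a - 1))
     * ((psihat z - complex_of_real (U0 t)) / (complex_of_real t - z) + (psihat z - exp (- z) * complex_of_real (U1 t)) / (complex_of_real t + z)) \<partial>lborel)"
proof -
  define F where "F t u v = complex_of_real (indicator {0..1} u * Psi0 v * (indicator {0<..} t * t powr (a - 1) * exp (- (t * \<bar>u - v\<bar>)))) * exp (- z * complex_of_real u)" for t u v :: real
  have Fm: "(\<lambda>(t,(u,v)). F t u v) \<in> borel_measurable (lborel \<Otimes>\<^sub>M (lborel \<Otimes>\<^sub>M lborel))"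
    unfolding F_def by (rule meas3) measurable
  define K where "K = MP * exp \<bar>Re z\<bar> * Gamma a"
  have K0: "0 \<le> K" using MP_nonneg Gamma_real_pos[OF a0] by (simp add: K_def)
  have Fi: "integrable (lborel \<Otimes>\<^sub>M (lborel \<Otimes>\<^sub>M lborel)) (\<lambda>(t,(u,v)). F t u v)"
  proof (rule integrable3I[OF Fm])
    have "(\<integral>\<^sup>+u. (\<integral>\<^sup>+v. (\<integral>\<^sup>+t. ennreal (norm (norm (F t u v))) \<partial>lborel) \<partial>lborel) \<partial>lborel) < \<infinity>"
    proof (rule nn3_fin[OF K0])
      fix u v :: real assume uv: "u \<noteq> v"
      define C where "C = \<bar>Psi0 v\<bar> * indicator {0..1} u * norm (exp (- z * complex_of_real u))"
      have C0: "0 \<le> C" by (simp add: C_def)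
      have CB: "C \<le> MP * exp \<bar>Re z\<bar> * indicator {0..1} u * indicator {0..1} v"
      proof (cases "u \<in> {0..1}")
        case True
        have e2: "norm (exp (- z * complex_of_real u)) \<le> exp \<bar>Re z\<bar>" using True by (intro norm_exp_bound01) auto
        have "C \<le> (MP * indicator {0..1} v) * exp \<bar>Re z\<bar>"
          unfolding C_def using True Psi0_bound'[of v] e2 MP_nonneg by (auto intro!: mult_mono)
        thus ?thesis using True by (simp add: mult_ac)
      next
        case False thus ?thesis by (simp add: C_def)
      qed
      have "(\<integral>\<^sup>+t. ennreal (norm (norm (F t u v))) \<partial>lborel) = (\<integral>\<^sup>+t. ennreal C * ennreal (indicator {0<..} t * t powr (a - 1) * exp (- (t * \<bar>u - v\<bar>))) \<partial>lborel)"
        by (intro nn_integral_cong) (simp add: F_def C_def norm_mult abs_mult ennreal_mult'[symmetric] indicator_def mult_ac)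
      also have "\<dots> = ennreal C * ennreal (Gamma a * \<bar>u - v\<bar> powr (- a))"
        using uv by (subst nn_integral_cmult) (simp_all add: nn_gamma[OF a0])
      also have "\<dots> \<le> ennreal (K * indicator {0..1} u * indicator {0..1} v * \<bar>u - v\<bar> powr (- a))"
      proof -
        have "C * (Gamma a * \<bar>u - v\<bar> powr (- a)) \<le> (MP * exp \<bar>Re z\<bar> * indicator {0..1} u * indicator {0..1} v) * (Gamma a * \<bar>u - v\<bar> powr (- a))"
          using CB Gamma_real_pos[OF a0] by (intro mult_right_mono) auto
        hence "ennreal (C * (Gamma a * \<bar>u - v\<bar> powr (- a))) \<le> ennreal (K * indicator {0..1} u * indicator {0..1} v * \<bar>u - v\<bar> powr (- a))"
          by (intro ennreal_leI) (simp add: K_def mult_ac)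
        thus ?thesis using C0 by (simp add: ennreal_mult'[symmetric])
      qed
      finally show "(\<integral>\<^sup>+t. ennreal (norm (norm (F t u v))) \<partial>lborel) \<le> ennreal (K * indicator {0..1} u * indicator {0..1} v * \<bar>u - v\<bar> powr (- a))" .
    qed
    thus "(\<integral>\<^sup>+u. (\<integral>\<^sup>+v. (\<integral>\<^sup>+t. ennreal (norm (F t u v)) \<partial>lborel) \<partial>lborel) \<partial>lborel) < \<infinity>" by simp
  qed
  have step1: "complex_of_real (Gamma a) * ghat z = complex_of_real c * (\<integral>u. (\<integral>v. (\<integral>t. F t u v \<partial>lborel) \<partial>lborel) \<partial>lborel)"
  proof -
    have "complex_of_real (Gamma a) * ghat z = (\<integral>u. complex_of_real c * (\<integral>v. (\<integral>t. F t u v \<partial>lborel) \<partial>lborel) \<partial>lborel)"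
      unfolding ghat_def
    proof (subst integral_mult_right_zero[symmetric], intro Bochner_Integration.integral_cong refl)
      fix u :: real
      have "complex_of_real (Gamma a) * (complex_of_real (indicator {0..1} u * g u) * exp (- z * complex_of_real u))
          = complex_of_real c * (complex_of_real (\<integral>v. indicator {0..1} u * Psi0 v * Rv u v \<partial>lborel) * exp (- z * complex_of_real u))"
      proof -
        have "Gamma a * (indicator {0..1} u * g u) = c * (\<integral>v. indicator {0..1} u * Psi0 v * Rv u v \<partial>lborel)"
        proof -
          have "(\<integral>v. indicator {0..1} u * Psi0 v * Rv u v \<partial>lborel) = indicator {0..1} u * (\<integral>v. Rv u v * Psi0 v \<partial>lborel)"
            by (subst integral_mult_right_zero[symmetric]) (simp add: mult_ac)
          thus ?thesis using Gamma_g[of u] by (simp add: mult_ac)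
        qed
        hence "complex_of_real (Gamma a) * complex_of_real (indicator {0..1} u * g u) = complex_of_real c * complex_of_real (\<integral>v. indicator {0..1} u * Psi0 v * Rv u v \<partial>lborel)"
          by (simp only: of_real_mult[symmetric])
        thus ?thesis by (simp add: mult.assoc[symmetric])
      qed
      also have "\<dots> = complex_of_real c * (\<integral>v. complex_of_real (indicator {0..1} u * Psi0 v * Rv u v) * exp (- z * complex_of_real u) \<partial>lborel)"
        by (simp only: integral_complex_of_real[symmetric] integral_mult_left_zero)
      also have "\<dots> = complex_of_real c * (\<integral>v. (\<integral>t. F t u v \<partial>lborel) \<partial>lborel)"
      proof (intro arg_cong[where f="\<lambda>x. complex_of_real c * x"] Bochner_Integration.integral_cong refl)
        fix v :: real
        have "indicator {0..1} u * Psi0 v * Rv u v = (\<integral>t. indicator {0..1} u * Psi0 v * (indicator {0<..} t * t powr (a - 1) * exp (- (t * \<bar>u - v\<bar>))) \<partial>lborel)"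
          by (simp add: Rv_def)
        thus "complex_of_real (indicator {0..1} u * Psi0 v * Rv u v) * exp (- z * complex_of_real u) = (\<integral>t. F t u v \<partial>lborel)"
          unfolding F_def by (simp only: integral_complex_of_real[symmetric] integral_mult_left_zero)
      qed
      finally show "complex_of_real (Gamma a) * (complex_of_real (indicator {0..1} u * g u) * exp (- z * complex_of_real u))
          = complex_of_real c * (\<integral>v. (\<integral>t. F t u v \<partial>lborel) \<partial>lborel)" .
    qed
    also have "\<dots> = complex_of_real c * (\<integral>u. (\<integral>v. (\<integral>t. F t u v \<partial>lborel) \<partial>lborel) \<partial>lborel)" by simp
    finally show ?thesis .
  qed
  also have "(\<integral>u. (\<integral>v. (\<integral>t. F t u v \<partial>lborel) \<partial>lborel) \<partial>lborel) = (\<integral>t. (\<integral>u. (\<integral>v. F t u v \<partial>lborel) \<partial>lborel) \<partial>lborel)"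
    by (rule fubini3[OF Fi, symmetric])
  also have "\<dots> = (\<integral>t. complex_of_real (indicator {0<..} t * t powr (a - 1))
     * ((psihat z - complex_of_real (U0 t)) / (complex_of_real t - z) + (psihat z - exp (- z) * complex_of_real (U1 t)) / (complex_of_real t + z)) \<partial>lborel)"
  proof (rule Bochner_Integration.integral_cong[OF refl])
    fix t :: real
    show "(\<integral>u. (\<integral>v. F t u v \<partial>lborel) \<partial>lborel) = complex_of_real (indicator {0<..} t * t powr (a - 1))
     * ((psihat z - complex_of_real (U0 t)) / (complex_of_real t - z) + (psihat z - exp (- z) * complex_of_real (U1 t)) / (complex_of_real t + z))"
    proof (cases "0 < t")
      case True
      have "(\<integral>u. (\<integral>v. F t u v \<partial>lborel) \<partial>lborel) = complex_of_real (indicator {0<..} t * t powr (a - 1)) *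
          (\<integral>u. (\<integral>v. complex_of_real (indicator {0..1} u * Psi0 v * exp (- (t * \<bar>u - v\<bar>))) * exp (- z * complex_of_real u) \<partial>lborel) \<partial>lborel)"
        by (simp only: integral_mult_right_zero[symmetric]) (simp add: F_def mult_ac)
      also have "\<dots> = complex_of_real (indicator {0<..} t * t powr (a - 1))
          * ((psihat z - complex_of_real (U0 t)) / (complex_of_real t - z) + (psihat z - exp (- z) * complex_of_real (U1 t)) / (complex_of_real t + z))"
        using inner_t[OF True tz(1)[OF True] tz(2)[OF True]] by simp
      finally show ?thesis .
    next
      case False thus ?thesis by (simp add: F_def)
    qed
  qed
  finally show ?thesis .
qed

end

definition "dlt (w::complex) = min \<bar>Im w\<bar> (min (1/2) (\<bar>Im w\<bar> / (2 * cmod w)))"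

lemma dlt_pos: "Im w \<noteq> 0 \<Longrightarrow> 0 < dlt w"
proof -
  assume "Im w \<noteq> 0"
  hence "w \<noteq> 0" by auto
  thus "0 < dlt w" using \<open>Im w \<noteq> 0\<close> by (simp add: dlt_def)
qed

lemma den1: "dlt w \<le> cmod (complex_of_real t - w)"
proof -
  have "\<bar>Im w\<bar> = \<bar>Im (complex_of_real t - w)\<bar>" by simp
  also have "\<dots> \<le> cmod (complex_of_real t - w)" by (rule abs_Im_le_cmod)
  finally show ?thesis unfolding dlt_def by linarith
qed

lemma den2:
  assumes w: "Im w \<noteq> 0" and t: "1 \<le> t"
  shows "dlt w * t \<le> cmod (complex_of_real t - w)"
proof (cases "2 * cmod w \<le> t")
  case True
  have "t - cmod w \<le> cmod (complex_of_real t - w)"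
    using norm_triangle_ineq2[of "complex_of_real t" w] t by simp
  moreover have "dlt w \<le> 1/2" by (simp add: dlt_def)
  ultimately have "dlt w * t \<le> (1/2) * t" using t by (intro mult_right_mono) auto
  thus ?thesis using True \<open>t - cmod w \<le> _\<close> by linarith
next
  case False
  have wpos: "0 < cmod w" using w by auto
  have "dlt w * t \<le> (\<bar>Im w\<bar> / (2 * cmod w)) * t" using t by (intro mult_right_mono) (auto simp: dlt_def)
  also have "\<dots> \<le> \<bar>Im w\<bar>"
  proof -
    have "\<bar>Im w\<bar> * t \<le> \<bar>Im w\<bar> * (2 * cmod w)" using False by (intro mult_left_mono) auto
    thus ?thesis using wpos by (simp add: field_simps)
  qed
  also have "\<dots> \<le> cmod (complex_of_real t - w)" using den1[of w t] abs_Im_le_cmod[of "complex_of_real t - w"] by simp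
  finally show ?thesis .
qed

definition "Bf a t = indicator {0..1} t * t powr (a - 1) + indicator {1..} t * t powr (a - 2)"

lemma Bf_int:
  fixes a :: real assumes a: "0 < a" "a < 1"
  shows "integrable lborel (Bf a)"
proof -
  have h1: "((\<lambda>t. t powr (a - 1)) has_integral (1 powr (a - 1 + 1) / (a - 1 + 1))) {0..1}"
    by (rule has_integral_powr_from_0) (use a in auto)
  have nn1: "(\<integral>\<^sup>+t. ennreal (indicator {0..1} t * t powr (a - 1)) \<partial>lborel) = ennreal (1 powr (a - 1 + 1) / (a - 1 + 1))"
    using nn_integral_has_integral_lebesgue[OF _ h1] by simp
  have I1: "integrable lborel (\<lambda>t. indicator {0..1} t * t powr (a - 1))"
    by (rule integrableI_nonneg) (auto simp: nn1)
  have h2: "((\<lambda>t. t powr (a - 2)) has_integral (- (1 powr (a - 2 + 1)) / (a - 2 + 1))) {1..}"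
    by (rule has_integral_powr_to_inf) (use a in auto)
  have nn2: "(\<integral>\<^sup>+t. ennreal (indicator {1..} t * t powr (a - 2)) \<partial>lborel) = ennreal (- (1 powr (a - 2 + 1)) / (a - 2 + 1))"
    using nn_integral_has_integral_lebesgue[OF _ h2] by simp
  have I2: "integrable lborel (\<lambda>t. indicator {1..} t * t powr (a - 2))"
    by (rule integrableI_nonneg) (auto simp: nn2)
  show ?thesis unfolding Bf_def[abs_def] using I1 I2 by simp
qed

lemma t_int:
  fixes k :: "real \<Rightarrow> complex" and a :: real
  assumes a: "0 < a" "a < 1" and w: "Im w \<noteq> 0" and km: "k \<in> borel_measurable borel"
    and kb: "\<And>t. 0 < t \<Longrightarrow> norm (k t) \<le> M"
  shows "integrable lborel (\<lambda>t. complex_of_real (indicator {0<..} t * t powr (a - 1)) * k t / (complex_of_real t - w))"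
proof -
  have M0: "0 \<le> M" using order_trans[OF norm_ge_zero kb[of 1]] by simp
  have d: "0 < dlt w" using dlt_pos[OF w] .
  have I: "integrable lborel (\<lambda>t. (M / dlt w) * Bf a t)" using Bf_int[OF a] by simp
  show ?thesis
  proof (rule Bochner_Integration.integrable_bound[OF I])
    show "(\<lambda>t. complex_of_real (indicator {0<..} t * t powr (a - 1)) * k t / (complex_of_real t - w)) \<in> borel_measurable lborel"
      using km by measurable
    show "AE t in lborel. norm (complex_of_real (indicator {0<..} t * t powr (a - 1)) * k t / (complex_of_real t - w)) \<le> norm ((M / dlt w) * Bf a t)"
    proof (intro AE_I2)
      fix t :: real
      have Bf0: "0 \<le> Bf a t" by (simp add: Bf_def)
      show "norm (complex_of_real (indicator {0<..} t * t powr (a - 1)) * k t / (complex_of_real t - w)) \<le> norm ((M / dlt w) * Bf a t)"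
      proof (cases "0 < t")
        case False thus ?thesis by simp
      next
        case True
        have den: "0 < cmod (complex_of_real t - w)" using den1[of w t] d by linarith
        have "norm (complex_of_real (indicator {0<..} t * t powr (a - 1)) * k t / (complex_of_real t - w))
            = t powr (a - 1) * norm (k t) / cmod (complex_of_real t - w)"
          using True by (simp add: norm_mult norm_divide)
        also have "\<dots> \<le> t powr (a - 1) * M / cmod (complex_of_real t - w)"
          using kb[OF True] den by (intro divide_right_mono mult_left_mono) auto
        also have "\<dots> \<le> (M / dlt w) * Bf a t"
        proof (cases "t \<le> 1")
          case True2: True
          have "t powr (a - 1) * M / cmod (complex_of_real t - w) \<le> t powr (a - 1) * M / dlt w"
            using den1[of w t] d M0 den by (intro divide_left_mono mult_nonneg_nonneg mult_pos_pos) auto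
          also have "\<dots> \<le> (M / dlt w) * (t powr (a - 1))" by (simp add: mult.commute)
          also have "\<dots> \<le> (M / dlt w) * Bf a t"
            using True True2 M0 d by (intro mult_left_mono) (auto simp: Bf_def indicator_def)
          finally show ?thesis .
        next
          case False2: False
          hence t1: "1 \<le> t" by simp
          have "t powr (a - 1) * M / cmod (complex_of_real t - w) \<le> t powr (a - 1) * M / (dlt w * t)"
            using den2[OF w t1] d M0 t1 den by (intro divide_left_mono mult_nonneg_nonneg mult_pos_pos) auto
          also have "\<dots> = (M / dlt w) * t powr (a - 2)"
            using t1 d by (simp add: powr_diff field_simps powr_add[symmetric] power2_eq_square)
          also have "\<dots> \<le> (M / dlt w) * Bf a t"
            using t1 M0 d by (intro mult_left_mono) (auto simp: Bf_def indicator_def)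
          finally show ?thesis .
        qed
        also have "\<dots> = norm ((M / dlt w) * Bf a t)" using M0 d Bf0 by simp
        finally show ?thesis .
      qed
    qed
  qed
qed

context fou begin

lemma U_bound_gen:
  assumes kb: "\<And>v. v \<in> {0..1} \<Longrightarrow> \<bar>k v\<bar> \<le> 1" and km: "k \<in> borel_measurable borel"
  shows "\<bar>\<integral>v. Psi0 v * k v \<partial>lborel\<bar> \<le> MP"
proof -
  have I: "integrable lborel (\<lambda>v. MP * indicator {0..1::real} v)" by simp
  have bnd: "norm (Psi0 v * k v) \<le> MP * indicator {0..1} v" for v
  proof (cases "v \<in> {0..1}")
    case True
    have "\<bar>Psi0 v\<bar> * \<bar>k v\<bar> \<le> MP * 1" using Psi0_bound'[of v] kb[OF True] True MP_nonneg by (intro mult_mono) auto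
    thus ?thesis using True by (simp add: abs_mult)
  next
    case False thus ?thesis by (simp add: Psi0_def)
  qed
  have I2: "integrable lborel (\<lambda>v. Psi0 v * k v)"
    by (rule Bochner_Integration.integrable_bound[OF I]) (use km bnd MP_nonneg in auto)
  have "\<bar>\<integral>v. Psi0 v * k v \<partial>lborel\<bar> \<le> (\<integral>v. norm (Psi0 v * k v) \<partial>lborel)"
    using integral_norm_bound[of lborel "\<lambda>v. Psi0 v * k v"] by simp
  also have "\<dots> \<le> (\<integral>v. MP * indicator {0..1::real} v \<partial>lborel)"
    using integrable_norm[OF I2] I bnd by (intro Bochner_Integration.integral_mono) auto
  also have "\<dots> = MP" by simp
  finally show ?thesis .
qed

lemma U0_bound: "0 < t \<Longrightarrow> \<bar>U0 t\<bar> \<le> MP"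
  unfolding U0_def by (rule U_bound_gen) auto

lemma U1_bound: "0 < t \<Longrightarrow> \<bar>U1 t\<bar> \<le> MP"
  unfolding U1_def by (rule U_bound_gen) auto

lemma U0_meas[measurable]: "U0 \<in> borel_measurable borel"
  unfolding U0_def[abs_def] by (rule lborel.borel_measurable_lebesgue_integral, rule meas2', measurable)

lemma U1_meas[measurable]: "U1 \<in> borel_measurable borel"
  unfolding U1_def[abs_def] by (rule lborel.borel_measurable_lebesgue_integral, rule meas2', measurable)

lemma ufun_eq: "ufun b \<phi> x t = (\<integral>y. Psi0 y * exp (- t * \<bar>x - y\<bar>) \<partial>lborel)"
  unfolding ufun_def
  using interval_integral_Icc[of 0 1 "\<lambda>y. psi b \<phi> y * exp (- t * \<bar>x - y\<bar>)"]
  by (simp add: zero_ereal_def one_ereal_def set_lebesgue_integral_def Psi0_def mult.assoc)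

lemma ufun0: "ufun b \<phi> 0 t = U0 t"
  unfolding ufun_eq U0_def
  by (intro Bochner_Integration.integral_cong refl) (auto simp: Psi0_def indicator_def)

lemma ufun1: "ufun b \<phi> 1 t = U1 t"
  unfolding ufun_eq U1_def
  by (intro Bochner_Integration.integral_cong refl) (auto simp: Psi0_def indicator_def)

lemma psi0_eq: "complex_of_real (psi b \<phi> 0) = laplace01 \<phi> (- complex_of_real b)"
proof -
  have "psi b \<phi> 0 = (\<integral>r. phi0 r * exp (b * r) \<partial>lborel)"
    unfolding psi_def
    using interval_integral_Icc[of 0 1 "\<lambda>r. exp (b * r) * \<phi> r"]
    by (simp add: zero_ereal_def one_ereal_def set_lebesgue_integral_def phi0_def mult_ac)
  hence "complex_of_real (psi b \<phi> 0) = (\<integral>r. complex_of_real (phi0 r) * complex_of_real (exp (b * r)) \<partial>lborel)"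
    by (simp only: integral_complex_of_real[symmetric] of_real_mult)
  also have "\<dots> = laplace01 \<phi> (- complex_of_real b)"
    unfolding Lap_eq by (intro Bochner_Integration.integral_cong refl) (simp add: exp_of_real[symmetric])
  finally show ?thesis .
qed

lemma stepE:
  assumes z: "Im z \<noteq> 0"
  shows "(\<integral>t. complex_of_real (indicator {0<..} t * t powr (a - 1))
     * ((psihat z - complex_of_real (U0 t)) / (complex_of_real t - z) + (psihat z - exp (- z) * complex_of_real (U1 t)) / (complex_of_real t + z)) \<partial>lborel)
    = psihat z * (LBINT t:{0<..}. complex_of_real (2 * t powr a) / (complex_of_real t ^ 2 - z ^ 2))
      - (LBINT t:{0<..}. complex_of_real (t powr (a - 1) * ufun b \<phi> 0 t) / (complex_of_real t - z))
      - exp (- z) * (LBINT t:{0<..}. complex_of_real (t powr (a - 1) * ufun b \<phi> 1 t) / (complex_of_real t - - z))"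
proof -
  have mz: "Im (- z) \<noteq> 0" using z by simp
  define T where "T t = complex_of_real (indicator {0<..} t * t powr (a - 1))" for t :: real
  have i1: "integrable lborel (\<lambda>t. T t * 1 / (complex_of_real t - z))"
    unfolding T_def by (rule t_int[OF a0 a1 z, where M=1]) auto
  have i2: "integrable lborel (\<lambda>t. T t * 1 / (complex_of_real t - - z))"
    unfolding T_def by (rule t_int[OF a0 a1 mz, where M=1]) auto
  have i3: "integrable lborel (\<lambda>t. T t * complex_of_real (U0 t) / (complex_of_real t - z))"
    unfolding T_def by (rule t_int[OF a0 a1 z, where M=MP]) (use U0_bound in auto)
  have i4: "integrable lborel (\<lambda>t. T t * complex_of_real (U1 t) / (complex_of_real t - - z))"
    unfolding T_def by (rule t_int[OF a0 a1 mz, where M=MP]) (use U1_bound in auto)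
  have Iz: "(LBINT t:{0<..}. complex_of_real (2 * t powr a) / (complex_of_real t ^ 2 - z ^ 2))
      = (\<integral>t. T t * 1 / (complex_of_real t - z) + T t * 1 / (complex_of_real t - - z) \<partial>lborel)"
    unfolding set_lebesgue_integral_def
  proof (intro Bochner_Integration.integral_cong refl)
    fix t :: real
    show "indicator {0<..} t *\<^sub>R (complex_of_real (2 * t powr a) / (complex_of_real t ^ 2 - z ^ 2))
        = T t * 1 / (complex_of_real t - z) + T t * 1 / (complex_of_real t - - z)"
    proof (cases "0 < t")
      case True
      have n1: "complex_of_real t - z \<noteq> 0" using z by (auto simp: complex_eq_iff)
      have n2: "complex_of_real t + z \<noteq> 0" using z by (auto simp: complex_eq_iff)
      have pw: "complex_of_real (2 * t powr a) = complex_of_real (t powr (a - 1)) * (2 * complex_of_real t)"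
        using True by (simp add: powr_diff)
      have sq: "complex_of_real t ^ 2 - z ^ 2 = (complex_of_real t - z) * (complex_of_real t + z)"
        by (simp add: power2_eq_square algebra_simps)
      show ?thesis using True n1 n2 unfolding T_def pw sq
        by (simp add: field_simps)
    next
      case False thus ?thesis by (simp add: T_def)
    qed
  qed
  have J0: "(LBINT t:{0<..}. complex_of_real (t powr (a - 1) * ufun b \<phi> 0 t) / (complex_of_real t - z))
      = (\<integral>t. T t * complex_of_real (U0 t) / (complex_of_real t - z) \<partial>lborel)"
    unfolding set_lebesgue_integral_def ufun0
    by (intro Bochner_Integration.integral_cong refl) (simp add: T_def indicator_def)
  have J1: "(LBINT t:{0<..}. complex_of_real (t powr (a - 1) * ufun b \<phi> 1 t) / (complex_of_real t - - z))
      = (\<integral>t. T t * complex_of_real (U1 t) / (complex_of_real t - - z) \<partial>lborel)"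
    unfolding set_lebesgue_integral_def ufun1
    by (intro Bochner_Integration.integral_cong refl) (simp add: T_def indicator_def)
  have "(\<integral>t. complex_of_real (indicator {0<..} t * t powr (a - 1))
     * ((psihat z - complex_of_real (U0 t)) / (complex_of_real t - z) + (psihat z - exp (- z) * complex_of_real (U1 t)) / (complex_of_real t + z)) \<partial>lborel)
     = (\<integral>t. psihat z * (T t * 1 / (complex_of_real t - z) + T t * 1 / (complex_of_real t - - z))
          - T t * complex_of_real (U0 t) / (complex_of_real t - z)
          - exp (- z) * (T t * complex_of_real (U1 t) / (complex_of_real t - - z)) \<partial>lborel)"
    by (intro Bochner_Integration.integral_cong refl) (simp add: T_def algebra_simps add_divide_distrib diff_divide_distrib)
  also have "\<dots> = psihat z * (\<integral>t. T t * 1 / (complex_of_real t - z) + T t * 1 / (complex_of_real t - - z) \<partial>lborel)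
      - (\<integral>t. T t * complex_of_real (U0 t) / (complex_of_real t - z) \<partial>lborel)
      - exp (- z) * (\<integral>t. T t * complex_of_real (U1 t) / (complex_of_real t - - z) \<partial>lborel)"
  proof -
    let ?P = "\<lambda>t. T t * 1 / (complex_of_real t - z)"
    let ?Q = "\<lambda>t. T t * 1 / (complex_of_real t - - z)"
    let ?B = "\<lambda>t. T t * complex_of_real (U0 t) / (complex_of_real t - z)"
    let ?R = "\<lambda>t. T t * complex_of_real (U1 t) / (complex_of_real t - - z)"
    have iPQ: "integrable lborel (\<lambda>t. ?P t + ?Q t)" by (rule Bochner_Integration.integrable_add[OF i1 i2])
    have iA: "integrable lborel (\<lambda>t. psihat z * (?P t + ?Q t))" by (rule integrable_mult_right[OF iPQ])
    have iC: "integrable lborel (\<lambda>t. exp (- z) * ?R t)" by (rule integrable_mult_right[OF i4])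
    have iAB: "integrable lborel (\<lambda>t. psihat z * (?P t + ?Q t) - ?B t)" by (rule Bochner_Integration.integrable_diff[OF iA i3])
    have "(\<integral>t. psihat z * (?P t + ?Q t) - ?B t - exp (- z) * ?R t \<partial>lborel)
        = (\<integral>t. psihat z * (?P t + ?Q t) - ?B t \<partial>lborel) - (\<integral>t. exp (- z) * ?R t \<partial>lborel)"
      by (rule Bochner_Integration.integral_diff[OF iAB iC])
    also have "(\<integral>t. psihat z * (?P t + ?Q t) - ?B t \<partial>lborel) = (\<integral>t. psihat z * (?P t + ?Q t) \<partial>lborel) - (\<integral>t. ?B t \<partial>lborel)"
      by (rule Bochner_Integration.integral_diff[OF iA i3])
    also have "(\<integral>t. psihat z * (?P t + ?Q t) \<partial>lborel) = psihat z * (\<integral>t. ?P t + ?Q t \<partial>lborel)"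
      by (rule integral_mult_right_zero)
    also have "(\<integral>t. exp (- z) * ?R t \<partial>lborel) = exp (- z) * (\<integral>t. ?R t \<partial>lborel)"
      by (rule integral_mult_right_zero)
    finally show ?thesis .
  qed
  finally show ?thesis unfolding Iz J0 J1 .
qed

end

context fou begin

lemma psi_int_eq:
  assumes x: "0 \<le> x" "x \<le> 1"
  shows "psi b \<phi> x = exp (- b * x) * integral {x..1} (\<lambda>r. exp (b * r) * \<phi> r)"
proof -
  have c: "continuous_on {x..1} (\<lambda>r. exp (b * r) * \<phi> r)"
    by (intro continuous_intros continuous_on_subset[OF phi_cont]) (use x in auto)
  have "(LBINT r=x..1. exp (b * r) * \<phi> r) = integral {x..1} (\<lambda>r. exp (b * r) * \<phi> r)"
    using interval_integral_eq_integral[OF x(2) borel_integrable_atLeastAtMost'[OF c]]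
    by (simp add: one_ereal_def)
  thus ?thesis by (simp add: psi_def)
qed

lemma psi_deriv: "vector_derivative (psi b \<phi>) (at 1 within {0..1}) = - \<phi> 1"
proof -
  define f where "f r = exp (b * r) * \<phi> r" for r
  have c: "continuous_on {0..1} f" unfolding f_def by (intro continuous_intros phi_cont)
  have d1: "((\<lambda>x. integral {x..1} f) has_real_derivative - f 1) (at 1 within {0..1})"
    by (rule integral_has_real_derivative'[OF c]) auto
  have d2: "((\<lambda>x. exp (- b * x)) has_real_derivative (- b * exp (- b * 1))) (at 1 within {0..1})"
    by (auto intro!: derivative_eq_intros)
  have d: "((\<lambda>x. exp (- b * x) * integral {x..1} f) has_real_derivative
      (exp (- b * 1) * (- f 1) + (- b * exp (- b * 1)) * integral {1..1} f)) (at 1 within {0..1})"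
    using DERIV_mult[OF d2 d1] by (simp add: mult_ac)
  have val: "exp (- b * 1) * (- f 1) + (- b * exp (- b * 1)) * integral {1..1} f = - \<phi> 1"
    by (simp add: f_def exp_minus field_simps)
  have d': "(psi b \<phi> has_real_derivative - \<phi> 1) (at 1 within {0..1})"
  proof (rule has_field_derivative_transform_within[OF d[unfolded val] zero_less_one])
    show "1 \<in> {0..1::real}" by simp
    fix x :: real assume "x \<in> {0..1}" "dist x 1 < 1"
    thus "exp (- b * x) * integral {x..1} f = psi b \<phi> x"
      using psi_int_eq[of x] by (simp add: f_def[abs_def])
  qed
  hence "(psi b \<phi> has_vector_derivative - \<phi> 1) (at 1 within cbox 0 1)"
    by (simp add: has_real_derivative_iff_has_vector_derivative)
  hence "vector_derivative (psi b \<phi>) (at 1 within cbox 0 1) = - \<phi> 1"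
    by (rule vector_derivative_within_cbox[rotated 2]) auto
  thus ?thesis by simp
qed

end

lemma final_alg:
  fixes Lp Lb z b P Ga lam E ph1 c Iz J0 J1 Lm Gc P0 P1 :: complex
  assumes c: "c \<noteq> 0" and Lm: "Lm \<noteq> 0"
    and h1: "Lp = Lb - (z + b) * P"
    and h2: "Ga * ((z - b) * lam * Lp + E * (lam * ph1)) = c * (P * Iz - J0 - E * J1)"
    and hG: "Gc = Ga * lam / c"
    and hL: "Lm = Gc * (z ^ 2 - b ^ 2) + Iz"
    and hP0: "P0 = - Gc * (b - z) * Lb + J0"
    and hP1: "P1 = - Gc * (- ph1) + J1"
  shows "Lp = Lb - (z + b) / Lm * (P0 + E * P1)"
proof -
  have h2': "Gc * ((z - b) * Lp + E * ph1) = P * Iz - J0 - E * J1"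
    using h2 c unfolding hG by (simp add: field_simps)
  have key: "P * Lm = P0 + E * P1"
    using h2' unfolding hL hP0 hP1 h1 by (simp add: algebra_simps power2_eq_square)
  have "P = (P0 + E * P1) / Lm" using key Lm by (simp add: field_simps)
  thus ?thesis using h1 by simp
qed

context fou begin

lemma final_locale:
  assumes z: "Im z \<noteq> 0" and Lnz: "Lam a b lam z \<noteq> 0"
  shows "laplace01 \<phi> z = laplace01 \<phi> (- complex_of_real b)
           - (z + complex_of_real b) / Lam a b lam z
             * (Phi0 a b lam \<phi> z + exp (- z) * Phi1 a b lam \<phi> (- z))"
proof -
  have zb: "z + complex_of_real b \<noteq> 0" using z by (auto simp: complex_eq_iff)
  have bz: "complex_of_real b - z \<noteq> 0" using z by (auto simp: complex_eq_iff)
  have tz1: "complex_of_real t - z \<noteq> 0" if "0 < t" for t using z by (auto simp: complex_eq_iff)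
  have tz2: "complex_of_real t + z \<noteq> 0" if "0 < t" for t using z by (auto simp: complex_eq_iff)
  have c0: "complex_of_real c \<noteq> 0" using c_pos by simp
  have h1: "laplace01 \<phi> z = laplace01 \<phi> (- complex_of_real b) - (z + complex_of_real b) * psihat z"
    using psihat_eq[OF zb] zb by (simp add: field_simps)
  have h2: "complex_of_real (Gamma a) * ((z - complex_of_real b) * complex_of_real lam * laplace01 \<phi> z + exp (- z) * (complex_of_real lam * complex_of_real (\<phi> 1)))
      = complex_of_real c * (psihat z * (LBINT t:{0<..}. complex_of_real (2 * t powr a) / (complex_of_real t ^ 2 - z ^ 2))
      - (LBINT t:{0<..}. complex_of_real (t powr (a - 1) * ufun b \<phi> 0 t) / (complex_of_real t - z))
      - exp (- z) * (LBINT t:{0<..}. complex_of_real (t powr (a - 1) * ufun b \<phi> 1 t) / (complex_of_real t - - z)))"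
    using stepD[OF tz1 tz2] stepC[OF bz] stepE[OF z] by simp
  show ?thesis
  proof (rule final_alg[OF c0 Lnz h1 h2])
    show "complex_of_real (Gamma a * lam / c_alpha a) = complex_of_real (Gamma a) * complex_of_real lam / complex_of_real c"
      by (simp add: c_def)
    show "Lam a b lam z = complex_of_real (Gamma a * lam / c_alpha a) * (z ^ 2 - complex_of_real b ^ 2) + (LBINT t:{0<..}. complex_of_real (2 * t powr a) / (complex_of_real t ^ 2 - z ^ 2))"
      by (simp add: Lam_def)
    show "Phi0 a b lam \<phi> z = - complex_of_real (Gamma a * lam / c_alpha a) * (complex_of_real b - z) * laplace01 \<phi> (- complex_of_real b)
        + (LBINT t:{0<..}. complex_of_real (t powr (a - 1) * ufun b \<phi> 0 t) / (complex_of_real t - z))"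
      by (simp add: Phi0_def psi0_eq)
    show "Phi1 a b lam \<phi> (- z) = - complex_of_real (Gamma a * lam / c_alpha a) * (- complex_of_real (\<phi> 1))
        + (LBINT t:{0<..}. complex_of_real (t powr (a - 1) * ufun b \<phi> 1 t) / (complex_of_real t - - z))"
      by (simp add: Phi1_def psi_deriv)
  qed
qed

end

theorem lemma5p1:
  fixes H \<beta> lam :: real and \<phi> :: "real \<Rightarrow> real" and z :: complex
  assumes H: "1/2 < H" "H < 1"
    and lam_pos: "lam > 0"
    and meas: "set_borel_measurable lborel {0..1} \<phi>"
    and L2: "set_integrable lborel {0..1} (\<lambda>x. (\<phi> x)\<^sup>2)"
    and nonzero: "\<not> (AE x in lborel. x \<in> {0..1} \<longrightarrow> \<phi> x = 0)"
    and eigen: "\<forall>x\<in>{0..1}. (LBINT y=0..1. fou_kernel (2 - 2*H) \<beta> x y * \<phi> y) = lam * \<phi> x"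
    and z_nonreal: "Im z \<noteq> 0"
    and Lam_nz: "Lam (2 - 2*H) \<beta> lam z \<noteq> 0"
  shows "laplace01 \<phi> z = laplace01 \<phi> (- complex_of_real \<beta>)
           - (z + complex_of_real \<beta>) / Lam (2 - 2*H) \<beta> lam z
             * (Phi0 (2 - 2*H) \<beta> lam \<phi> z + exp (- z) * Phi1 (2 - 2*H) \<beta> lam \<phi> (- z))"
proof -
  interpret fou "2 - 2*H" \<beta> lam \<phi>
    by unfold_locales (use H lam_pos meas L2 eigen in auto)
  show ?thesis by (rule final_locale[OF z_nonreal Lam_nz])
qed

end
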